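(* Let $\omega$ and $\omega'$ be two nonsingular Sturmian words (not necessarily of the same slope, i.e. not necessarily with the same set of factors). Then for every nonempty prefix $u$ of $\omega$ and every nonempty prefix $u'$ of $\omega'$, the set $\omega|_u\cap\omega'|_{u'}$ is an IP$^*$-set (respectively, a central$^*$ set); in particular it is infinite.
   Context: A Sturmian word is an infinite word over $\{0,1\}$ having exactly $k+1$ distinct factors of length $k$ for every $k\ge0$. With $T$ the shift and $\Omega$ the shift-orbit closure of a Sturmian word $\omega$, the characteristic word $\tilde\omega$ is the unique element of $\Omega$ all of whose prefixes $v$ are left special ($0v$, $1v$ both factors of $\omega$); $\omega$ is nonsingular if $T^n(\omega)\ne\tilde\omega$ for all $n\ge1$. $\omega|_u=\{n\in\mathbb N:\omega_n\cdots\omega_{n+|u|-1}=u\}$. A set $A\subseteq\mathbb N$ is an IP-set if there is $x_0<x_1<\cdots$ in $\mathbb N$ with $\sum_{n\in F}x_n\in A$ for all nonempty finite $F$; IP$^*$ if it meets every IP-set. $\beta\mathbb N$ is the set of ultrafilters on $\mathbb N$ with addition $A\in p+q$ iff $\{n:A-n\in p\}\in q$; a minimal idempotent is a non-principal $p=p+p$ in the smallest two-sided ideal of $\beta\mathbb N$; central sets are members of some minimal idempotent, and central$^*$ sets are sets belonging to every minimal idempotent. *)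

theory Defs
  imports Main
begin

text \<open>Infinite words are functions nat => nat, taking values in {0,1}; positions start at 0.\<close>

definition binary_word :: "(nat \<Rightarrow> nat) \<Rightarrow> bool" where
  "binary_word w \<longleftrightarrow> range w \<subseteq> {0, 1}"

definition factor_at :: "(nat \<Rightarrow> nat) \<Rightarrow> nat \<Rightarrow> nat \<Rightarrow> nat list" where
  "factor_at w n k = map w [n..<n + k]"

definition is_factor :: "(nat \<Rightarrow> nat) \<Rightarrow> nat list \<Rightarrow> bool" where
  "is_factor w v \<longleftrightarrow> (\<exists>n. factor_at w n (length v) = v)"

definition factors_of_length :: "(nat \<Rightarrow> nat) \<Rightarrow> nat \<Rightarrow> nat list set" where
  "factors_of_length w k = {factor_at w n k | n. True}"

definition sturmian :: "(nat \<Rightarrow> nat) \<Rightarrow> bool" where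
  "sturmian w \<longleftrightarrow> binary_word w \<and> (\<forall>k. card (factors_of_length w k) = k + 1)"

definition shift :: "nat \<Rightarrow> (nat \<Rightarrow> nat) \<Rightarrow> (nat \<Rightarrow> nat)" where
  "shift n w = (\<lambda>i. w (i + n))"

text \<open>Shift-orbit closure in the product (Cantor) topology: x is in the closure of
  {T^n w | n} iff every cylinder around x meets the orbit.\<close>
definition orbit_closure :: "(nat \<Rightarrow> nat) \<Rightarrow> (nat \<Rightarrow> nat) set" where
  "orbit_closure w = {x. \<forall>N. \<exists>n. \<forall>i<N. x i = shift n w i}"

definition left_special :: "(nat \<Rightarrow> nat) \<Rightarrow> nat list \<Rightarrow> bool" where
  "left_special w v \<longleftrightarrow> is_factor w (0 # v) \<and> is_factor w (1 # v)"

definition characteristic_word :: "(nat \<Rightarrow> nat) \<Rightarrow> (nat \<Rightarrow> nat)" where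
  "characteristic_word w =
     (THE x. x \<in> orbit_closure w \<and> (\<forall>k. left_special w (factor_at x 0 k)))"

definition nonsingular :: "(nat \<Rightarrow> nat) \<Rightarrow> bool" where
  "nonsingular w \<longleftrightarrow> (\<forall>n\<ge>1. shift n w \<noteq> characteristic_word w)"

definition occurrences :: "(nat \<Rightarrow> nat) \<Rightarrow> nat list \<Rightarrow> nat set" where
  "occurrences w u = {n. factor_at w n (length u) = u}"

definition is_prefix :: "nat list \<Rightarrow> (nat \<Rightarrow> nat) \<Rightarrow> bool" where
  "is_prefix u w \<longleftrightarrow> factor_at w 0 (length u) = u"

definition IP_set :: "nat set \<Rightarrow> bool" where
  "IP_set A \<longleftrightarrow> (\<exists>x :: nat \<Rightarrow> nat. strict_mono x \<and>
      (\<forall>F. finite F \<and> F \<noteq> {} \<longrightarrow> sum x F \<in> A))"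

definition IP_star :: "nat set \<Rightarrow> bool" where
  "IP_star A \<longleftrightarrow> (\<forall>B. IP_set B \<longrightarrow> A \<inter> B \<noteq> {})"

definition ultrafilter_nat :: "nat set set \<Rightarrow> bool" where
  "ultrafilter_nat p \<longleftrightarrow>
     UNIV \<in> p \<and> {} \<notin> p \<and>
     (\<forall>A B. A \<in> p \<and> A \<subseteq> B \<longrightarrow> B \<in> p) \<and>
     (\<forall>A B. A \<in> p \<and> B \<in> p \<longrightarrow> A \<inter> B \<in> p) \<and>
     (\<forall>A. A \<in> p \<or> - A \<in> p)"

definition betaN :: "nat set set set" where
  "betaN = {p. ultrafilter_nat p}"

text \<open>A - n = {m. m + n \<in> A}; A \<in> p + q iff {n. A - n \<in> p} \<in> q.\<close>
definition bplus :: "nat set set \<Rightarrow> nat set set \<Rightarrow> nat set set" where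
  "bplus p q = {A. {n. {m. m + n \<in> A} \<in> p} \<in> q}"

definition principal :: "nat set set \<Rightarrow> bool" where
  "principal p \<longleftrightarrow> (\<exists>n. {n} \<in> p)"

definition two_sided_ideal :: "nat set set set \<Rightarrow> bool" where
  "two_sided_ideal I \<longleftrightarrow> I \<noteq> {} \<and> I \<subseteq> betaN \<and>
     (\<forall>p\<in>I. \<forall>q\<in>betaN. bplus p q \<in> I \<and> bplus q p \<in> I)"

text \<open>The smallest two-sided ideal K(beta N) (it exists, so it equals the
  intersection of all two-sided ideals).\<close>
definition smallest_ideal :: "nat set set set" where
  "smallest_ideal = \<Inter> {I. two_sided_ideal I}"

definition minimal_idempotent :: "nat set set \<Rightarrow> bool" where
  "minimal_idempotent p \<longleftrightarrow> p \<in> betaN \<and> \<not> principal p \<and> bplus p p = p \<and>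
     p \<in> smallest_ideal"

definition central :: "nat set \<Rightarrow> bool" where
  "central A \<longleftrightarrow> (\<exists>p. minimal_idempotent p \<and> A \<in> p)"

definition central_star :: "nat set \<Rightarrow> bool" where
  "central_star A \<longleftrightarrow> (\<forall>p. minimal_idempotent p \<longrightarrow> A \<in> p)"

end

theory Submission
  imports Defs "HOL-Analysis.Kronecker_Approximation_Theorem"
begin


lemma factor_at_length[simp]: "length (factor_at w n k) = k"
  by (simp add: factor_at_def)

lemma factor_at_nth[simp]: "i < k \<Longrightarrow> factor_at w n k ! i = w (n+i)"
  by (simp add: factor_at_def)

lemma factor_at_0[simp]: "factor_at w n 0 = []"
  by (simp add: factor_at_def)

lemma factor_at_eq_iff: "factor_at w n k = factor_at v m k \<longleftrightarrow> (\<forall>i<k. w (n+i) = v (m+i))"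
  by (simp add: list_eq_iff_nth_eq)

lemma factor_at_Suc: "factor_at w n (Suc k) = factor_at w n k @ [w (n+k)]"
  by (simp add: factor_at_def)

lemma factor_at_Suc': "factor_at w n (Suc k) = w n # factor_at w (Suc n) k"
  by (rule nth_equalityI) (auto simp: nth_Cons split: nat.splits)

lemma take_factor_at: "k \<le> l \<Longrightarrow> take k (factor_at w n l) = factor_at w n k"
  by (auto simp: list_eq_iff_nth_eq)

lemma factor_at_SS: "factor_at w p (Suc (Suc k)) = w p # factor_at w (Suc p) k @ [w (Suc p + k)]"
  by (simp only: factor_at_Suc'[of w p "Suc k"] factor_at_Suc[of w "Suc p" k])

lemma factor_at_SS': "m \<ge> 1 \<Longrightarrow> factor_at w (m - 1) (Suc (Suc k)) = w (m - 1) # factor_at w m k @ [w (m + k)]"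
  using factor_at_SS[of w "m - 1" k] by simp

lemma factor_at_add: "factor_at w n (k+l) = factor_at w n k @ factor_at w (n+k) l"
  by (rule nth_equalityI) (auto simp: nth_append add.assoc)

lemma is_factor_iff: "is_factor w v \<longleftrightarrow> v \<in> factors_of_length w (length v)"
  unfolding is_factor_def factors_of_length_def by (auto intro: sym)

lemma factor_in_F[simp]: "factor_at w n k \<in> factors_of_length w k"
  by (auto simp: factors_of_length_def)

lemma is_factor_at[simp]: "is_factor w (factor_at w n k)"
  by (auto simp: is_factor_def)

lemma is_factor_append: "is_factor w (u @ v) \<Longrightarrow> is_factor w u \<and> is_factor w v"
proof -
  assume "is_factor w (u @ v)"
  then obtain n where n: "factor_at w n (length u + length v) = u @ v"
    by (auto simp: is_factor_def)
  then have "factor_at w n (length u) @ factor_at w (n + length u) (length v) = u @ v"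
    by (simp add: factor_at_add)
  then have "factor_at w n (length u) = u" "factor_at w (n + length u) (length v) = v"
    by (auto simp: append_eq_append_conv)
  then show ?thesis by (auto simp: is_factor_def)
qed

lemma is_factor_Cons: "is_factor w (a # v) \<Longrightarrow> is_factor w v"
  using is_factor_append[of w "[a]" v] by simp

lemma is_factor_snoc: "is_factor w (v @ [a]) \<Longrightarrow> is_factor w v"
  using is_factor_append[of w v "[a]"] by simp

lemma is_factor_take: "is_factor w v \<Longrightarrow> is_factor w (take k v)"
  using is_factor_append[of w "take k v" "drop k v"] by simp

lemma is_factor_drop: "is_factor w v \<Longrightarrow> is_factor w (drop k v)"
  using is_factor_append[of w "take k v" "drop k v"] by simp

lemma F_0: "factors_of_length w 0 = {[]}"
  by (auto simp: factors_of_length_def)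

lemma sturmian_finite: "sturmian w \<Longrightarrow> finite (factors_of_length w k)"
  unfolding sturmian_def by (intro card_ge_0_finite) simp

lemma sturmian_card: "sturmian w \<Longrightarrow> card (factors_of_length w k) = k + 1"
  unfolding sturmian_def by auto

lemma binary_letter: "binary_word w \<Longrightarrow> w i = 0 \<or> w i = 1"
  unfolding binary_word_def by auto

lemma evper_mult:
  fixes w :: "nat \<Rightarrow> 'a" and t p :: nat
  assumes "\<forall>n\<ge>N. w (n+p) = w n" "n \<ge> N"
  shows "w (n + t*p) = w n"
proof (induction t)
  case (Suc t)
  have "w (n + t*p + p) = w (n + t*p)" using assms by simp
  then show ?case using Suc by (simp add: algebra_simps)
qed simp

lemma evper_F_subset:
  assumes "\<forall>n\<ge>N. w (n+p) = w n" "p > 0"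
  shows "factors_of_length w k \<subseteq> (\<lambda>n. factor_at w n k) ` {..<N+p}"
proof
  fix v assume "v \<in> factors_of_length w k"
  then obtain n where v: "v = factor_at w n k" by (auto simp: factors_of_length_def)
  show "v \<in> (\<lambda>n. factor_at w n k) ` {..<N+p}"
  proof (cases "n < N + p")
    case True then show ?thesis using v by auto
  next
    case False
    define m where "m = N + (n - N) mod p"
    define t where "t = (n - N) div p"
    have "(n-N) div p * p + (n-N) mod p = n - N" by (rule div_mult_mod_eq)
    then have n_eq: "n = m + t * p" unfolding m_def t_def using False by linarith
    have "m < N + p" unfolding m_def using assms(2) by simp
    moreover have "factor_at w n k = factor_at w m k"
      unfolding factor_at_eq_iff
    proof (intro allI impI)
      fix i assume "i < k"
      have "w (m + i + t*p) = w (m+i)" by (rule evper_mult[OF assms(1)]) (simp add: m_def)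
      then show "w (n+i) = w (m+i)" by (simp add: n_eq algebra_simps)
    qed
    ultimately show ?thesis using v by auto
  qed
qed

lemma sturmian_not_evper:
  assumes "sturmian w" "p > 0"
  shows "\<not> (\<forall>n\<ge>N. w (n+p) = w n)"
proof
  assume A: "\<forall>n\<ge>N. w (n+p) = w n"
  have "card (factors_of_length w (N+p)) \<le> card ((\<lambda>n. factor_at w n (N+p)) ` {..<N+p})"
    by (rule card_mono[OF _ evper_F_subset[OF A assms(2)]]) simp
  also have "\<dots> \<le> N + p" using card_image_le[of "{..<N+p}"] by simp
  finally show False using sturmian_card[OF assms(1)] by simp
qed

section \<open>Morse-Hedlund\<close>

lemma F_butlast: "factors_of_length w j = butlast ` factors_of_length w (Suc j)"
proof
  show "factors_of_length w j \<subseteq> butlast ` factors_of_length w (Suc j)"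
  proof
    fix v assume "v \<in> factors_of_length w j"
    then obtain n where "v = factor_at w n j" by (auto simp: factors_of_length_def)
    then have "v = butlast (factor_at w n (Suc j))" by (simp add: factor_at_Suc)
    then show "v \<in> butlast ` factors_of_length w (Suc j)" by auto
  qed
next
  show "butlast ` factors_of_length w (Suc j) \<subseteq> factors_of_length w j"
    by (auto simp: factors_of_length_def factor_at_Suc)
qed

lemma morse_hedlund:
  assumes fin: "\<And>j. finite (factors_of_length w j)"
    and k: "card (factors_of_length w k) \<le> k"
  shows "\<exists>N p. p > 0 \<and> (\<forall>n\<ge>N. w (n+p) = w n)"
proof -
  let ?F = "factors_of_length w"
  have mono: "card (?F j) \<le> card (?F (Suc j))" for j
    using F_butlast[of w j] card_image_le[OF fin] by metis
  have "\<exists>j<k. card (?F (Suc j)) \<le> card (?F j)"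
  proof (rule ccontr)
    assume "\<not> ?thesis"
    then have H: "\<forall>j<k. card (?F j) < card (?F (Suc j))" by auto
    have "\<forall>j\<le>k. j + 1 \<le> card (?F j)"
    proof (intro allI impI)
      fix j assume "j \<le> k" then show "j + 1 \<le> card (?F j)"
      proof (induction j)
        case 0 then show ?case by (simp add: F_0)
      next
        case (Suc j)
        then have "card (?F j) < card (?F (Suc j))" using H by simp
        then show ?case using Suc by simp
      qed
    qed
    then have "k + 1 \<le> card (?F k)" by simp
    then show False using k by simp
  qed
  then obtain j where j: "card (?F (Suc j)) \<le> card (?F j)" by auto
  have "card (butlast ` ?F (Suc j)) = card (?F (Suc j))"
    using j mono[of j] F_butlast[of w j] by simp
  then have inj: "inj_on butlast (?F (Suc j))" by (rule eq_card_imp_inj_on[OF fin])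
  define W where "W n = factor_at w n j" for n
  have step: "w (n+j) = w (m+j) \<and> W (Suc n) = W (Suc m)" if "W n = W m" for n m
  proof -
    have "butlast (factor_at w n (Suc j)) = butlast (factor_at w m (Suc j))"
      using that by (simp add: W_def factor_at_Suc)
    then have eq: "factor_at w n (Suc j) = factor_at w m (Suc j)"
      using inj by (auto simp: inj_on_def)
    then have "w (n+j) = w (m+j)" by (simp add: factor_at_Suc)
    moreover have "W (Suc n) = W (Suc m)" using eq by (simp add: W_def factor_at_Suc')
    ultimately show ?thesis by simp
  qed
  have "\<not> inj_on W {..card (?F j)}"
  proof
    assume "inj_on W {..card (?F j)}"
    then have "card (W ` {..card (?F j)}) = card (?F j) + 1" by (simp add: card_image)
    moreover have "card (W ` {..card (?F j)}) \<le> card (?F j)"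
      by (rule card_mono[OF fin]) (auto simp: W_def)
    ultimately show False by linarith
  qed
  then obtain n0 m0 where nm0: "n0 \<noteq> m0" "W n0 = W m0" unfolding inj_on_def by blast
  define n where "n = min n0 m0"
  define m where "m = max n0 m0"
  have nm: "n < m" "W n = W m" using nm0 by (auto simp: n_def m_def min_def max_def)
  have all: "W (n+i) = W (m+i)" for i
  proof (induction i)
    case 0 then show ?case using nm by simp
  next
    case (Suc i)
    have "W (Suc (n+i)) = W (Suc (m+i))" using step[OF Suc.IH] by blast
    then show ?case by simp
  qed
  show ?thesis
  proof (intro exI conjI allI impI)
    show "m - n > 0" using nm by simp
    fix t assume "t \<ge> n + j"
    define i where "i = t - (n + j)"
    have t: "t = n + i + j" using \<open>t \<ge> n + j\<close> by (simp add: i_def)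
    have "w (n + i + j) = w (m + i + j)" using step[OF all[of i]] by simp
    then show "w (t + (m - n)) = w t" using t nm by (simp add: algebra_simps)
  qed
qed

lemma factor_at_shift: "factor_at (shift s w) n k = factor_at w (n+s) k"
  by (auto simp: list_eq_iff_nth_eq shift_def algebra_simps)

lemma sturmian_recurrent:
  assumes st: "sturmian w" and f: "is_factor w v"
  shows "\<exists>n\<ge>1. factor_at w n (length v) = v"
proof (rule ccontr)
  assume no: "\<not> ?thesis"
  let ?L = "length v"
  obtain n0 where n0: "factor_at w n0 ?L = v" using f by (auto simp: is_factor_def)
  have L: "?L \<ge> 1"
  proof (rule ccontr)
    assume "\<not> ?L \<ge> 1" then have "v = []" by (cases v) auto
    then show False using no by auto
  qed
  define y where "y = shift 1 w"
  have Fy: "factors_of_length y j \<subseteq> factors_of_length w j" for j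
    by (auto simp: factors_of_length_def y_def factor_at_shift)
  have finy: "finite (factors_of_length y j)" for j
    using Fy finite_subset sturmian_finite[OF st] by blast
  have "factors_of_length y ?L \<subseteq> factors_of_length w ?L - {v}"
  proof
    fix z assume "z \<in> factors_of_length y ?L"
    then obtain n where z: "z = factor_at w (n+1) ?L"
      by (auto simp: factors_of_length_def y_def factor_at_shift)
    then have "z \<noteq> v" using no by auto
    then show "z \<in> factors_of_length w ?L - {v}" using z by simp
  qed
  then have "card (factors_of_length y ?L) \<le> card (factors_of_length w ?L - {v})"
    by (rule card_mono[rotated]) (simp add: sturmian_finite[OF st])
  also have "\<dots> = ?L"
  proof -
    have "v \<in> factors_of_length w ?L" using n0 factor_in_F by metis
    then show ?thesis using sturmian_card[OF st] sturmian_finite[OF st] by (simp add: card_Diff_singleton)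
  qed
  finally obtain N p where "p > 0" "\<forall>n\<ge>N. y (n+p) = y n"
    using morse_hedlund[OF finy] by blast
  then have "\<forall>n\<ge>N+1. w (n+p) = w n"
  proof (intro allI impI)
    fix n assume n: "n \<ge> N + 1"
    assume A: "\<forall>n\<ge>N. y (n + p) = y n"
    have "n - 1 \<ge> N" using n by simp
    then have "y (n - 1 + p) = y (n - 1)" using A by blast
    then show "w (n + p) = w n" using n by (simp add: y_def shift_def)
  qed
  then show False using sturmian_not_evper[OF st \<open>p>0\<close>] by blast
qed

lemma sturmian_recurrent_large:
  assumes st: "sturmian w" and f: "is_factor w v"
  shows "\<exists>n\<ge>M. factor_at w n (length v) = v"
proof (induction M)
  case 0 then show ?case using f by (auto simp: is_factor_def)
next
  case (Suc M)
  then obtain n where n: "n \<ge> M" "factor_at w n (length v) = v" by auto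
  obtain m where m: "m \<ge> 1" "factor_at w m (n + length v) = factor_at w 0 (n + length v)"
    using sturmian_recurrent[OF st, of "factor_at w 0 (n + length v)"] by auto
  then have A: "\<forall>i<n + length v. w (m+i) = w i" by (simp add: factor_at_eq_iff)
  have "factor_at w (m+n) (length v) = factor_at w n (length v)"
  proof (simp add: factor_at_eq_iff, intro allI impI)
    fix i assume "i < length v"
    then have "w (m + (n+i)) = w (n+i)" using A by simp
    then show "w (m + n + i) = w (n + i)" by (simp add: add.assoc)
  qed
  then show ?case using n m by (intro exI[of _ "m+n"]) auto
qed


definition right_special :: "(nat \<Rightarrow> nat) \<Rightarrow> nat list \<Rightarrow> bool" where
  "right_special w v \<longleftrightarrow> is_factor w (v @ [0]) \<and> is_factor w (v @ [1])"

definition bispecial :: "(nat \<Rightarrow> nat) \<Rightarrow> nat list \<Rightarrow> bool" where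
  "bispecial w v \<longleftrightarrow> left_special w v \<and> right_special w v"

lemma card_fiber2:
  assumes "finite A" "f ` A = B" "x1 \<in> A" "x2 \<in> A" "y1 \<in> A" "y2 \<in> A"
    "x1 \<noteq> x2" "y1 \<noteq> y2" "f x1 = f x2" "f y1 = f y2" "f x1 \<noteq> f y1"
  shows "card B + 2 \<le> card A"
proof -
  let ?A = "A - {x1, y1}"
  have "B \<subseteq> f ` ?A"
  proof
    fix b assume "b \<in> B"
    then obtain a where a: "a \<in> A" "b = f a" using assms(2) by auto
    show "b \<in> f ` ?A"
    proof (cases "a = x1 \<or> a = y1")
      case True
      then show ?thesis
      proof
        assume "a = x1"
        then have "x2 \<in> ?A" "b = f x2" using assms a by auto
        then show ?thesis by blast
      next
        assume "a = y1"
        then have "y2 \<in> ?A" "b = f y2" using assms a by auto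
        then show ?thesis by blast
      qed
    qed (use a in auto)
  qed
  then have "card B \<le> card (f ` ?A)" by (intro card_mono) (use assms in auto)
  also have "\<dots> \<le> card ?A" by (intro card_image_le) (use assms in auto)
  also have "card ?A = card A - card {x1, y1}" using assms by (subst card_Diff_subset) auto
  moreover have "x1 \<noteq> y1" using assms by auto
  then have "card {x1, y1} = 2" by simp
  moreover have "card {x1, y1} \<le> card A" using assms by (intro card_mono) auto
  ultimately show ?thesis by linarith
qed

lemma card_fiber4:
  assumes "finite A" "f ` A = B" "x1 \<in> A" "x2 \<in> A" "x3 \<in> A" "x4 \<in> A"
    "distinct [x1, x2, x3, x4]" "f x1 = f x4" "f x2 = f x4" "f x3 = f x4"
  shows "card B + 3 \<le> card A"
proof -
  let ?A = "A - {x1, x2, x3}"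
  have "B \<subseteq> f ` ?A"
  proof
    fix b assume "b \<in> B"
    then obtain a where a: "a \<in> A" "b = f a" using assms(2) by auto
    show "b \<in> f ` ?A"
    proof (cases "a \<in> {x1, x2, x3}")
      case True
      then have "x4 \<in> ?A" "b = f x4" using assms a by auto
      then show ?thesis by blast
    qed (use a in auto)
  qed
  then have "card B \<le> card (f ` ?A)" by (intro card_mono) (use assms in auto)
  also have "\<dots> \<le> card ?A" by (intro card_image_le) (use assms in auto)
  also have "card ?A = card A - 3" using assms by (subst card_Diff_subset) auto
  moreover have "card {x1, x2, x3} \<le> card A" using assms by (intro card_mono) auto
  moreover have "card {x1, x2, x3} = 3" using assms by auto
  ultimately show ?thesis by linarith
qed

context
  fixes w :: "nat \<Rightarrow> nat"
  assumes st: "sturmian w"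
begin

abbreviation F where "F \<equiv> factors_of_length w"

lemma fin: "finite (F k)" by (rule sturmian_finite[OF st])
lemma cardF: "card (F k) = k + 1" by (rule sturmian_card[OF st])

lemma bin: "w i = 0 \<or> w i = 1"
  using st by (auto simp: sturmian_def binary_word_def)

lemma bin_neq: "w i \<noteq> a \<Longrightarrow> a \<in> {0,1} \<Longrightarrow> w i = 1 - a"
  using bin[of i] by auto

lemma factor_letters: "is_factor w v \<Longrightarrow> i < length v \<Longrightarrow> v ! i = 0 \<or> v ! i = 1"
  using bin by (auto simp: is_factor_def) (metis factor_at_nth)

lemma tl_surj: "tl ` F (Suc k) = F k"
proof
  show "tl ` F (Suc k) \<subseteq> F k"
    by (auto simp: factors_of_length_def factor_at_Suc')
next
  show "F k \<subseteq> tl ` F (Suc k)"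
  proof
    fix v assume "v \<in> F k"
    then have "is_factor w v" "length v = k" by (auto simp: is_factor_def factors_of_length_def)
    then obtain n where n: "n \<ge> 1" "factor_at w n k = v" using sturmian_recurrent[OF st] by blast
    have "factor_at w (n-1) (Suc k) = w (n-1) # v" using n by (simp add: factor_at_Suc')
    then show "v \<in> tl ` F (Suc k)" by (metis factor_in_F image_eqI list.sel(3))
  qed
qed

lemma mid_surj: "(\<lambda>z. tl (butlast z)) ` F (Suc (Suc k)) = F k"
proof
  show "(\<lambda>z. tl (butlast z)) ` F (Suc (Suc k)) \<subseteq> F k"
  proof
    fix z assume "z \<in> (\<lambda>z. tl (butlast z)) ` F (Suc (Suc k))"
    then obtain n where z: "z = tl (butlast (factor_at w n (Suc (Suc k))))"
      by (auto simp: factors_of_length_def)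
    have "factor_at w n (Suc (Suc k)) = w n # (factor_at w (Suc n) k @ [w (Suc n + k)])"
      by (simp only: factor_at_Suc'[of w n "Suc k"] factor_at_Suc[of w "Suc n" k])
    then have "z = factor_at w (Suc n) k" using z by simp
    then show "z \<in> F k" by simp
  qed
next
  show "F k \<subseteq> (\<lambda>z. tl (butlast z)) ` F (Suc (Suc k))"
  proof
    fix v assume "v \<in> F k"
    then have "is_factor w v" "length v = k" by (auto simp: is_factor_def factors_of_length_def)
    then obtain n where n: "n \<ge> 1" "factor_at w n k = v" using sturmian_recurrent[OF st] by blast
    have sn: "Suc (n-1) = n" using n by simp
    have "factor_at w (n-1) (Suc (Suc k)) = w (n-1) # factor_at w (Suc (n-1)) (Suc k)"
      by (rule factor_at_Suc')
    also have "\<dots> = w (n-1) # v @ [w (n+k)]" using n(2) unfolding sn by (simp add: factor_at_Suc)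
    finally have "factor_at w (n-1) (Suc (Suc k)) = w (n-1) # v @ [w (n+k)]" .
    then show "v \<in> (\<lambda>z. tl (butlast z)) ` F (Suc (Suc k))"
      by (metis (no_types, lifting) butlast_snoc factor_in_F image_eqI list.sel(3) append_Cons)
  qed
qed

lemma LS_unique:
  assumes "left_special w u" "left_special w v" "length u = length v"
  shows "u = v"
proof (rule ccontr)
  assume ne: "u \<noteq> v"
  let ?k = "length u"
  have mem: "0 # u \<in> F (Suc ?k)" "1 # u \<in> F (Suc ?k)" "0 # v \<in> F (Suc ?k)" "1 # v \<in> F (Suc ?k)"
    using assms by (auto simp: left_special_def is_factor_iff)
  have "card (F ?k) + 2 \<le> card (F (Suc ?k))"
    by (rule card_fiber2[OF fin tl_surj mem(1) mem(2) mem(3) mem(4)]) (use ne in auto)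
  then show False using cardF by simp
qed

lemma RS_unique:
  assumes "right_special w u" "right_special w v" "length u = length v"
  shows "u = v"
proof (rule ccontr)
  assume ne: "u \<noteq> v"
  let ?k = "length u"
  have mem: "u @ [0] \<in> F (Suc ?k)" "u @ [1] \<in> F (Suc ?k)" "v @ [0] \<in> F (Suc ?k)" "v @ [1] \<in> F (Suc ?k)"
    using assms by (auto simp: right_special_def is_factor_iff)
  have "card (F ?k) + 2 \<le> card (F (Suc ?k))"
    by (rule card_fiber2[OF fin F_butlast[symmetric] mem(1) mem(2) mem(3) mem(4)]) (use ne in auto)
  then show False using cardF by simp
qed

lemma ext_le3:
  "\<not> (is_factor w (0 # v @ [0]) \<and> is_factor w (0 # v @ [1]) \<and> is_factor w (1 # v @ [0]) \<and> is_factor w (1 # v @ [1]))"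
proof
  assume A: "is_factor w (0 # v @ [0]) \<and> is_factor w (0 # v @ [1]) \<and> is_factor w (1 # v @ [0]) \<and> is_factor w (1 # v @ [1])"
  let ?k = "length v"
  have mem: "0 # v @ [0] \<in> F (Suc (Suc ?k))" "0 # v @ [1] \<in> F (Suc (Suc ?k))"
     "1 # v @ [0] \<in> F (Suc (Suc ?k))" "1 # v @ [1] \<in> F (Suc (Suc ?k))"
    using A by (auto simp: is_factor_iff)
  have "card (F ?k) + 3 \<le> card (F (Suc (Suc ?k)))"
    by (rule card_fiber4[OF fin mid_surj mem]) auto
  then show False using cardF by simp
qed

end


lemma LS_prefix: "left_special w (u @ v) \<Longrightarrow> left_special w u"
  unfolding left_special_def using is_factor_append[of w "0 # u" v] is_factor_append[of w "1 # u" v] by simp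

lemma RS_suffix: "right_special w (u @ v) \<Longrightarrow> right_special w v"
  unfolding right_special_def using is_factor_append[of w u "v @ [0]"] is_factor_append[of w u "v @ [1]"] by simp

context
  fixes w :: "nat \<Rightarrow> nat"
  assumes st: "sturmian w"
begin

lemma bin': "w i = 0 \<or> w i = 1" by (rule bin[OF st])

lemma not_evper: "p > 0 \<Longrightarrow> \<not> (\<forall>n\<ge>N. w (n+p) = w n)"
  by (rule sturmian_not_evper[OF st])

lemma F1: "is_factor w [a]" if "a \<in> {0,1}"
proof -
  have sub: "factors_of_length w 1 \<subseteq> {[0],[1]}"
  proof
    fix z assume "z \<in> factors_of_length w 1"
    then obtain n where "z = [w n]" by (auto simp: factors_of_length_def factor_at_def)
    then show "z \<in> {[0],[1]}" using bin'[of n] by auto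
  qed
  have "card (factors_of_length w 1) = 2" using cardF[OF st, of 1] by simp
  then have "factors_of_length w 1 = {[0],[1]}"
    using card_subset_eq[of "{[0],[1]}" "factors_of_length w 1"] sub by simp
  then show ?thesis using that by (auto simp: is_factor_iff)
qed

lemma two_letters: "a \<in> {0,1} \<Longrightarrow> b \<in> {0,1} \<Longrightarrow> a \<noteq> b \<Longrightarrow> is_factor w [a, b]"
proof -
  assume ab: "a \<in> {0,1}" "b \<in> {0,1}" "a \<noteq> b"
  obtain n where n: "factor_at w n 1 = [a]" using F1[OF ab(1)] by (auto simp: is_factor_def)
  then have wn: "w n = a" by (simp add: factor_at_def)
  have "\<exists>m\<ge>n. w m = b"
  proof (rule ccontr)
    assume "\<not> ?thesis"
    then have "\<forall>m\<ge>n. w m = a" using ab bin' by (metis insertE singletonD)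
    then have "\<forall>m\<ge>n. w (m+1) = w m" by simp
    then show False using not_evper[of 1 n] by simp
  qed
  then obtain m where m: "m \<ge> n" "w m = b" by auto
  define m0 where "m0 = (LEAST m. m \<ge> n \<and> w m = b)"
  have m0: "m0 \<ge> n" "w m0 = b" using LeastI[of "\<lambda>m. m \<ge> n \<and> w m = b" m] m by (auto simp: m0_def)
  have "m0 \<noteq> n" using m0 wn ab by auto
  then have "m0 - 1 \<ge> n" "m0 - 1 < m0" using m0 by auto
  have "w (m0 - 1) = a"
  proof (cases "m0 - 1 = n")
    case True then show ?thesis using wn by simp
  next
    case False
    then have "\<not> (m0 - 1 \<ge> n \<and> w (m0-1) = b)"
      using not_less_Least[of "m0 - 1" "\<lambda>m. m \<ge> n \<and> w m = b"] \<open>m0 - 1 < m0\<close> by (auto simp: m0_def)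
    then have "w (m0-1) \<noteq> b" using \<open>m0 - 1 \<ge> n\<close> by simp
    then show ?thesis using ab bin'[of "m0-1"] by auto
  qed
  moreover have "Suc (m0 - 1) = m0" using m0 \<open>m0 \<noteq> n\<close> by simp
  ultimately have "factor_at w (m0 - 1) 2 = [a, b]" using m0
    by (simp add: numeral_2_eq_2 factor_at_Suc')
  then show ?thesis by (metis is_factor_at)
qed

definition PP :: "nat list \<Rightarrow> bool" where
  "PP v \<longleftrightarrow> is_factor w (0 # v @ [1]) \<and> is_factor w (1 # v @ [0])"

lemma PP_Nil: "PP []"
  unfolding PP_def using two_letters[of 0 1] two_letters[of 1 0] by simp

lemma bispecial_Nil: "bispecial w []"
  unfolding bispecial_def left_special_def right_special_def using F1 by simp

lemma bispecial_step:
  assumes bv: "bispecial w v" and Pv: "PP v" and bv': "bispecial w v'"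
    and pre: "take (length v) v' = v" and lt: "length v < length v'"
    and mx: "\<And>j. length v < j \<Longrightarrow> j < length v' \<Longrightarrow> \<not> bispecial w (take j v')"
  shows "PP v'"
proof -
  define n where "n = length v"
  define J where "J = length v'"
  define g where "g = J - n"
  have g: "g \<ge> 1" "J = n + g" using lt by (auto simp: n_def J_def g_def)
  define a where "a = v' ! n"
  have take1: "take (Suc n) v' = v @ [a]"
    using pre lt by (simp add: n_def a_def J_def take_Suc_conv_app_nth)
  have LSv': "left_special w v'" using bv' by (simp add: bispecial_def)
  have LS_take: "left_special w (take j v')" for j
    using LS_prefix[of w "take j v'" "drop j v'"] LSv' by simp
  have LSva: "left_special w (v @ [a])" using LS_take[of "Suc n"] take1 by simp
  have fva: "is_factor w (v @ [a])" using LSva by (auto simp: left_special_def dest: is_factor_Cons)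
  have a01: "a \<in> {0,1}"
    using factor_letters[OF st fva, of n] by (auto simp: n_def nth_append)
  define b where "b = 1 - a"
  have b01: "b \<in> {0,1}" "a \<noteq> b" using a01 by (auto simp: b_def)
  have ab_cases: "(a = 0 \<and> b = 1) \<or> (a = 1 \<and> b = 0)" using a01 by (auto simp: b_def)
  have f_ava: "is_factor w (a # v @ [a])" and f_bva: "is_factor w (b # v @ [a])"
    using LSva ab_cases by (auto simp: left_special_def)
  have f_avb: "is_factor w (a # v @ [b])"
    using Pv ab_cases by (auto simp: PP_def)
  have no_bvb: "\<not> is_factor w (b # v @ [b])"
    using ext_le3[OF st, of v] Pv LSva ab_cases by (auto simp: PP_def left_special_def)
  have RS_av: "right_special w (a # v)"
    using f_ava f_avb ab_cases by (auto simp: right_special_def)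
  have RSv': "right_special w v'" using bv' by (simp add: bispecial_def)
  have suff: "drop (g - 1) v' = a # v"
  proof (rule RS_unique[OF st])
    show "right_special w (drop (g - 1) v')"
      using RS_suffix[of w "take (g-1) v'" "drop (g-1) v'"] RSv' by simp
    show "right_special w (a # v)" by (rule RS_av)
    show "length (drop (g - 1) v') = length (a # v)" using g by (simp add: J_def n_def)
  qed
  have notRS: "\<not> right_special w (take j v')" if "n < j" "j < J" for j
    using mx[of j] LS_take[of j] that by (auto simp: bispecial_def n_def J_def)
  \<comment> \<open>Fact 1: forward determinism\<close>
  have fact1: "factor_at w p J = v'" if L: "factor_at w p (Suc n) = v @ [a]" for p
  proof -
    have "\<forall>d. Suc n + d \<le> J \<longrightarrow> factor_at w p (Suc n + d) = take (Suc n + d) v'"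
    proof
      fix d show "Suc n + d \<le> J \<longrightarrow> factor_at w p (Suc n + d) = take (Suc n + d) v'"
      proof (induction d)
        case 0 then show ?case using L take1 by simp
      next
        case (Suc d)
        show ?case
        proof
          assume le: "Suc n + Suc d \<le> J"
          then have IH: "factor_at w p (Suc n + d) = take (Suc n + d) v'" using Suc by simp
          let ?j = "Suc n + d"
          have tj: "take (Suc ?j) v' = take ?j v' @ [v' ! ?j]"
            using le by (simp add: take_Suc_conv_app_nth J_def)
          have "is_factor w (take (Suc ?j) v')"
            using LS_take[of "Suc ?j"] by (auto simp: left_special_def dest: is_factor_Cons)
          moreover have "is_factor w (take ?j v' @ [w (p + ?j)])"
          proof -
            have "factor_at w p (Suc ?j) = take ?j v' @ [w (p + ?j)]"
              using IH factor_at_Suc[of w p ?j] by simp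
            then show ?thesis by (metis is_factor_at)
          qed
          moreover have "v' ! ?j \<in> {0,1}"
            using factor_letters[OF st \<open>is_factor w (take (Suc ?j) v')\<close>, of ?j] tj le by (auto simp: nth_append J_def)
          moreover have "\<not> right_special w (take ?j v')" using notRS le by simp
          ultimately have "w (p + ?j) = v' ! ?j" using tj bin'[of "p + ?j"]
            by (auto simp: right_special_def)
          then show "factor_at w p (Suc n + Suc d) = take (Suc n + Suc d) v'"
            using IH tj by (simp add: factor_at_Suc)
        qed
      qed
    qed
    from this[rule_format, of "g - 1"] show ?thesis using g by (simp add: J_def)
  qed
  have sub: "factor_at w (p + i) l = take l (drop i v')" if "factor_at w p J = v'" "i + l \<le> J" for p i l
  proof -
    have "\<forall>k<J. v' ! k = w (p+k)" using that(1) by auto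
    then show ?thesis using that(2) by (intro nth_equalityI) (auto simp: J_def add.assoc)
  qed
  have factW: "take (Suc n) (drop i v') \<noteq> v @ [a]" if iv: "1 \<le> i" "i < g" for i
  proof
    assume eq: "take (Suc n) (drop i v') = v @ [a]"
    have ext: "is_factor w (take (J - i) v' @ [e])" if e: "is_factor w (v' @ [e])" for e
    proof -
      obtain q where q: "factor_at w q (Suc J) = v' @ [e]" using e by (auto simp: is_factor_def J_def)
      have qJ: "factor_at w q J = v'" "w (q + J) = e" using q by (auto simp: factor_at_Suc)
      have "factor_at w (q + i) (Suc n) = v @ [a]" using sub[OF qJ(1), of i "Suc n"] eq iv g by simp
      then have "factor_at w (q + i) J = v'" by (rule fact1)
      then have "factor_at w (q + i) (J - i) = take (J - i) v'" by (auto simp: list_eq_iff_nth_eq)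
      then have "factor_at w (q + i) (Suc (J - i)) = take (J - i) v' @ [e]"
        using qJ(2) iv g by (simp add: factor_at_Suc)
      then show ?thesis by (metis is_factor_at)
    qed
    have "right_special w (take (J - i) v')"
      using ext RSv' by (auto simp: right_special_def)
    moreover have "n < J - i" "J - i < J" using iv g by auto
    ultimately show False using notRS by blast
  qed
  \<comment> \<open>Fact 2: backward determinism\<close>
  have fact2: "factor_at w (r - (g - 1)) J = v'" if r: "g - 1 \<le> r" "factor_at w r (Suc n) = a # v" for r
  proof -
    have "\<forall>d. d \<le> g - 1 \<longrightarrow> factor_at w (r - d) (Suc n + d) = drop (g - 1 - d) v'"
    proof
      fix d show "d \<le> g - 1 \<longrightarrow> factor_at w (r - d) (Suc n + d) = drop (g - 1 - d) v'"
      proof (induction d)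
        case 0 then show ?case using r suff by simp
      next
        case (Suc d)
        show ?case
        proof
          assume le: "Suc d \<le> g - 1"
          then have IH: "factor_at w (r - d) (Suc n + d) = drop (g - 1 - d) v'" using Suc by simp
          define i where "i = g - 1 - d"
          define q where "q = r - d"
          have i: "1 \<le> i" "i < g" using le by (auto simp: i_def)
          have q: "q \<ge> 1" using le r by (auto simp: q_def)
          have win: "factor_at w q (Suc n) = take (Suc n) (drop i v')"
            using take_factor_at[of "Suc n" "Suc n + d" w q] IH by (simp add: q_def i_def)
          have notLS: "\<not> left_special w (take (Suc n) (drop i v'))"
          proof
            assume "left_special w (take (Suc n) (drop i v'))"
            then have "take (Suc n) (drop i v') = v @ [a]"
            proof (rule LS_unique[OF st _ LSva])
              show "length (take (Suc n) (drop i v')) = length (v @ [a])"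
                using i g by (simp add: J_def[symmetric] n_def)
            qed
            then show False using factW[OF i] by simp
          qed
          have dropi: "drop (i - 1) v' = v' ! (i - 1) # drop i v'"
            using Cons_nth_drop_Suc[of "i-1" v'] i g by (simp add: J_def)
          have f1: "is_factor w (w (q - 1) # take (Suc n) (drop i v'))"
          proof -
            have "factor_at w (q - 1) (Suc (Suc n)) = w (q - 1) # factor_at w q (Suc n)"
              using q by (simp add: factor_at_Suc')
            then show ?thesis using win by (metis is_factor_at)
          qed
          have f2: "is_factor w (v' ! (i - 1) # take (Suc n) (drop i v'))"
          proof -
            have "take (Suc (Suc n)) (drop (i - 1) v') = v' ! (i - 1) # take (Suc n) (drop i v')"
              using dropi by simp
            moreover have "is_factor w (take (Suc (Suc n)) (drop (i - 1) v'))"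
              using LSv' by (auto simp: left_special_def dest!: is_factor_Cons intro!: is_factor_take is_factor_drop)
            ultimately show ?thesis by simp
          qed
          have letter: "v' ! (i - 1) \<in> {0,1}"
            using f2 factor_letters[OF st f2, of 0] by simp
          have "w (q - 1) = v' ! (i - 1)"
          proof (rule ccontr)
            assume "w (q - 1) \<noteq> v' ! (i - 1)"
            then have "left_special w (take (Suc n) (drop i v'))"
              using f1 f2 letter bin'[of "q-1"] by (auto simp: left_special_def)
            then show False using notLS by simp
          qed
          then have "factor_at w (q - 1) (Suc n + Suc d) = v' ! (i - 1) # drop i v'"
          proof -
            assume wq: "w (q - 1) = v' ! (i - 1)"
            have "factor_at w (q - 1) (Suc (Suc n + d)) = w (q-1) # factor_at w (Suc (q-1)) (Suc n + d)"
              by (rule factor_at_Suc')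
            moreover have "Suc (q - 1) = q" using q by simp
            moreover have "factor_at w q (Suc n + d) = drop i v'" using IH by (simp add: q_def i_def)
            ultimately show ?thesis using wq by simp
          qed
          also have "\<dots> = drop (i - 1) v'" using dropi by simp
          finally show "factor_at w (r - Suc d) (Suc n + Suc d) = drop (g - 1 - Suc d) v'"
            using q by (simp add: q_def i_def)
        qed
      qed
    qed
    from this[rule_format, of "g - 1"] show ?thesis using g by (simp add: J_def)
  qed
  have goalA: "is_factor w (a # v' @ [b])"
  proof (rule ccontr)
    assume noA: "\<not> is_factor w (a # v' @ [b])"
    obtain p0 where p0: "factor_at w p0 (Suc (Suc n)) = a # v @ [a]"
      using f_ava by (auto simp: is_factor_def n_def)
    have inv: "w p = a \<Longrightarrow> factor_at w (Suc p) J = v' \<Longrightarrow> w (p + g) = a \<and> factor_at w (Suc (p + g)) J = v'" for p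
    proof -
      assume wp: "w p = a" and vp: "factor_at w (Suc p) J = v'"
      have "w (Suc p + J) \<noteq> b"
      proof
        assume "w (Suc p + J) = b"
        then have "factor_at w p (Suc (Suc J)) = a # v' @ [b]"
          using wp vp by (simp add: factor_at_SS)
        then show False using noA by (metis is_factor_at)
      qed
      then have wa: "w (Suc p + J) = a" using bin'[of "Suc p + J"] ab_cases by auto
      have "factor_at w (Suc p + (g - 1)) (Suc n) = a # v"
        using sub[OF vp, of "g - 1" "Suc n"] suff g by (simp add: n_def)
      then have A1: "w (p + g) = a" "factor_at w (Suc (p + g)) n = v"
        using g by (simp_all add: factor_at_Suc')
      then have "factor_at w (Suc (p + g)) (Suc n) = v @ [a]"
        using wa g by (simp add: factor_at_Suc algebra_simps)
      then show ?thesis using A1 fact1 by simp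
    qed
    have p0v: "w p0 = a" "factor_at w (Suc p0) J = v'"
    proof -
      show "w p0 = a" using p0 by (simp add: factor_at_Suc')
      have "factor_at w (Suc p0) (Suc n) = v @ [a]" using p0 by (simp add: factor_at_Suc')
      then show "factor_at w (Suc p0) J = v'" by (rule fact1)
    qed
    have allk: "w (p0 + k * g) = a \<and> factor_at w (Suc (p0 + k * g)) J = v'" for k
    proof (induction k)
      case 0 then show ?case using p0v by simp
    next
      case (Suc k) then show ?case using inv[of "p0 + k * g"] by (simp add: algebra_simps)
    qed
    have per: "w (p0 + k * g + t) = (a # v') ! t" if "t < g" for k t
    proof (cases t)
      case 0 then show ?thesis using allk[of k] by simp
    next
      case (Suc t')
      then have "t' < J" using that g by simp
      then show ?thesis using allk[of k] Suc by (auto simp: list_eq_iff_nth_eq)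
    qed
    have "\<forall>m\<ge>p0. w (m + g) = w m"
    proof (intro allI impI)
      fix m assume "m \<ge> p0"
      define k where "k = (m - p0) div g"
      define t where "t = (m - p0) mod g"
      have m: "m = p0 + k * g + t" using \<open>m \<ge> p0\<close> by (simp add: k_def t_def)
      have t: "t < g" using g by (simp add: t_def)
      have "m + g = p0 + Suc k * g + t" using m by simp
      then show "w (m + g) = w m" using per[OF t, of k] per[OF t, of "Suc k"] m by (simp add: algebra_simps)
    qed
    then show False using not_evper[of g p0] g by simp
  qed
  have goalB: "is_factor w (b # v' @ [a])"
  proof (rule ccontr)
    assume noB: "\<not> is_factor w (b # v' @ [a])"
    obtain p0 where p0: "p0 \<ge> g + 1" "factor_at w p0 (length (b # v @ [a])) = b # v @ [a]"
      using sturmian_recurrent_large[OF st f_bva] by blast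
    define P where "P = Suc p0"
    have LP: "factor_at w P (Suc n) = v @ [a]" "w (P - 1) = b"
      using p0 by (simp_all add: P_def factor_at_Suc' n_def)
    have claim: "\<forall>q. P \<le> q \<longrightarrow> factor_at w q (Suc n) = v @ [a] \<longrightarrow> w (q - 1) = b"
    proof
      fix q show "P \<le> q \<longrightarrow> factor_at w q (Suc n) = v @ [a] \<longrightarrow> w (q - 1) = b"
      proof (induction q rule: less_induct)
        case (less q)
        show ?case
        proof (intro impI)
          assume qP: "P \<le> q" and Lq: "factor_at w q (Suc n) = v @ [a]"
          show "w (q - 1) = b"
          proof (cases "q = P")
            case True then show ?thesis using LP by simp
          next
            case False
            then have qP': "P < q" using qP by simp
            show ?thesis
            proof (rule ccontr)
              assume "w (q - 1) \<noteq> b"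
              then have wq: "w (q - 1) = a" using bin'[of "q-1"] ab_cases by auto
              have qpos: "q \<ge> 1" using qP' by simp
              have "factor_at w (q - 1) (Suc n) = a # v"
              proof -
                have "factor_at w q n = v" using take_factor_at[of n "Suc n" w q] Lq by (simp add: n_def)
                moreover have "factor_at w (q-1) (Suc n) = w (q-1) # factor_at w (Suc (q-1)) n"
                  by (rule factor_at_Suc')
                moreover have "Suc (q-1) = q" using qpos by simp
                ultimately show ?thesis using wq by simp
              qed
              moreover have "g - 1 \<le> q - 1" using qP' p0 by (simp add: P_def)
              ultimately have vq: "factor_at w (q - g) J = v'"
                using fact2[of "q - 1"] g qpos by (simp add: diff_diff_left)
              show False
              proof (cases "P \<le> q - g")
                case True
                have "factor_at w (q - g) (Suc n) = v @ [a]"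
                  using sub[OF vq, of 0 "Suc n"] take1 g by simp
                then have "w (q - g - 1) = b" using less.IH[of "q - g"] True g qP' by auto
                moreover have "w (q - g + J) = a"
                proof -
                  have "q - g + J = q + n" using g(2) True unfolding P_def by linarith
                  then show ?thesis using Lq by (simp add: factor_at_Suc)
                qed
                moreover have "q - g \<ge> 1" using True by (simp add: P_def)
                ultimately have "factor_at w (q - g - 1) (Suc (Suc J)) = b # v' @ [a]"
                  using vq factor_at_SS'[where m="q - g" and k=J and w=w] by simp
                then show False using noB by (metis is_factor_at)
              next
                case False
                define i where "i = P - (q - g)"
                have i: "1 \<le> i" "i < g" using False qP' by (auto simp: i_def)
                have "factor_at w (q - g + i) (Suc n) = take (Suc n) (drop i v')"
                  using sub[OF vq, of i "Suc n"] i g by simp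
                moreover have "q - g + i = P" using False by (simp add: i_def)
                ultimately show False using factW[OF i] LP by simp
              qed
            qed
          qed
        qed
      qed
    qed
    obtain p1 where p1: "p1 \<ge> P" "factor_at w p1 (length (a # v @ [a])) = a # v @ [a]"
      using sturmian_recurrent_large[OF st f_ava] by blast
    have "factor_at w (Suc p1) (Suc n) = v @ [a]" "w p1 = a"
      using p1 by (simp_all add: factor_at_Suc' n_def)
    then have "a = b" using claim[rule_format, of "Suc p1"] p1 by simp
    then show False using b01 by simp
  qed
  show ?thesis unfolding PP_def using goalA goalB ab_cases by auto
qed

end


context
  fixes w :: "nat \<Rightarrow> nat"
  assumes st: "sturmian w"
begin

lemma bispecial_PP: "bispecial w v \<Longrightarrow> PP w v"
proof (induction "length v" arbitrary: v rule: less_induct)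
  case less
  show ?case
  proof (cases "v = []")
    case True then show ?thesis using PP_Nil[OF st] by simp
  next
    case False
    define S where "S = {k. k < length v \<and> bispecial w (take k v)}"
    have S0: "0 \<in> S" using False bispecial_Nil[OF st] by (simp add: S_def)
    have finS: "finite S" by (simp add: S_def)
    define n where "n = Max S"
    have nS: "n \<in> S" using Max_in[OF finS] S0 by (auto simp: n_def)
    then have n: "n < length v" "bispecial w (take n v)" by (auto simp: S_def)
    have len: "length (take n v) = n" using n by simp
    have P: "PP w (take n v)" using less.hyps[of "take n v"] n len by simp
    show ?thesis
    proof (rule bispecial_step[OF st n(2) P less.prems])
      show "take (length (take n v)) v = take n v" using len by simp
      show "length (take n v) < length v" using len n by simp
      fix j assume "length (take n v) < j" "j < length v"
      then have "j \<notin> S" using finS n_def len by (metis Max_ge not_le)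
      then show "\<not> bispecial w (take j v)" using \<open>j < length v\<close> by (simp add: S_def)
    qed
  qed
qed

lemma unbalanced_pair:
  "\<forall>u v. is_factor w u \<longrightarrow> is_factor w v \<longrightarrow> length u = N \<longrightarrow> length v = N \<longrightarrow>
     sum_list v + 2 \<le> sum_list u \<longrightarrow> (\<exists>z. is_factor w (1 # z @ [1]) \<and> is_factor w (0 # z @ [0]))"
proof (induction N rule: less_induct)
  case (less N)
  show ?case
  proof (intro allI impI)
    fix u v assume fu: "is_factor w u" and fv: "is_factor w v" and lu: "length u = N" and lv: "length v = N"
      and s: "sum_list v + 2 \<le> sum_list u"
    have IH: "\<And>u v. is_factor w u \<Longrightarrow> is_factor w v \<Longrightarrow> length u = length v \<Longrightarrow> length u < N \<Longrightarrow>
        sum_list v + 2 \<le> sum_list u \<Longrightarrow> \<exists>z. is_factor w (1 # z @ [1]) \<and> is_factor w (0 # z @ [0])"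
      using less.IH by metis
    show "\<exists>z. is_factor w (1 # z @ [1]) \<and> is_factor w (0 # z @ [0])"
    proof (rule ccontr)
      assume nz: "\<not> ?thesis"
      have une: "u \<noteq> []" using s by auto
      then obtain x u1 where u: "u = x # u1" by (cases u) auto
      obtain y v1 where v: "v = y # v1" using lu lv une by (cases v) auto
      have x: "x = 0 \<or> x = 1" using factor_letters[OF st fu, of 0] u by simp
      have y: "y = 0 \<or> y = 1" using factor_letters[OF st fv, of 0] v by simp
      have xy: "x = 1 \<and> y = 0"
      proof (rule ccontr)
        assume "\<not> (x = 1 \<and> y = 0)"
        then have "sum_list v1 + 2 \<le> sum_list u1" using s x y u v by auto
        moreover have "is_factor w u1" "is_factor w v1" using fu fv u v by (auto dest: is_factor_Cons)
        ultimately have "\<exists>z. is_factor w (1 # z @ [1]) \<and> is_factor w (0 # z @ [0])"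
          by (intro IH) (use lu lv u v in auto)
        then show False using nz by blast
      qed
      obtain x' u2 where u': "u = u2 @ [x']" using une by (cases u rule: rev_cases) auto
      obtain y' v2 where v': "v = v2 @ [y']" using lu lv une by (cases v rule: rev_cases) auto
      have x': "x' = 0 \<or> x' = 1" using factor_letters[OF st fu, of "length u2"] u' by simp
      have y': "y' = 0 \<or> y' = 1" using factor_letters[OF st fv, of "length v2"] v' by simp
      have xy': "x' = 1 \<and> y' = 0"
      proof (rule ccontr)
        assume "\<not> (x' = 1 \<and> y' = 0)"
        then have "sum_list v2 + 2 \<le> sum_list u2" using s x' y' u' v' by auto
        moreover have "is_factor w u2" "is_factor w v2" using fu fv u' v' by (auto dest: is_factor_snoc)
        ultimately have "\<exists>z. is_factor w (1 # z @ [1]) \<and> is_factor w (0 # z @ [0])"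
          by (intro IH) (use lu lv u' v' in auto)
        then show False using nz by blast
      qed
      have N2: "N \<ge> 2"
      proof (rule ccontr)
        assume "\<not> N \<ge> 2"
        then have "u1 = []" using lu u by (cases u1) auto
        then have "u = [1]" using u xy by simp
        then show False using s by simp
      qed
      define s1 where "s1 = butlast u1"
      define t1 where "t1 = butlast v1"
      have us: "u = 1 # s1 @ [1]"
      proof -
        have "u1 \<noteq> []" using N2 lu u by auto
        then have "u1 = butlast u1 @ [last u1]" by simp
        moreover have "last u1 = x'" using u u' \<open>u1 \<noteq> []\<close> by (metis last_ConsR last_snoc)
        ultimately show ?thesis using u xy xy' by (simp add: s1_def)
      qed
      have vt: "v = 0 # t1 @ [0]"
      proof -
        have "v1 \<noteq> []" using N2 lv v by auto
        then have "v1 = butlast v1 @ [last v1]" by simp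
        moreover have "last v1 = y'" using v v' \<open>v1 \<noteq> []\<close> by (metis last_ConsR last_snoc)
        ultimately show ?thesis using v xy xy' by (simp add: t1_def)
      qed
      have len_st: "length s1 = length t1" using us vt lu lv by simp
      have sum_st: "sum_list t1 \<le> sum_list s1" using s us vt by simp
      have "s1 \<noteq> t1" using nz fu fv us vt by blast
      then obtain i where i: "i < length s1" "s1 ! i \<noteq> t1 ! i" "take i s1 = take i t1"
      proof -
        assume H: "\<And>i. i < length s1 \<Longrightarrow> s1 ! i \<noteq> t1 ! i \<Longrightarrow> take i s1 = take i t1 \<Longrightarrow> thesis"
        have "\<exists>i<length s1. s1 ! i \<noteq> t1 ! i" using \<open>s1 \<noteq> t1\<close> len_st by (meson nth_equalityI)
        then obtain i0 where "i0 < length s1" "s1 ! i0 \<noteq> t1 ! i0" by blast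
        define i where "i = (LEAST i. i < length s1 \<and> s1 ! i \<noteq> t1 ! i)"
        have i1: "i < length s1" "s1 ! i \<noteq> t1 ! i"
          using LeastI[of "\<lambda>i. i < length s1 \<and> s1 ! i \<noteq> t1 ! i" i0] \<open>i0 < length s1\<close> \<open>s1 ! i0 \<noteq> t1 ! i0\<close>
          by (auto simp: i_def)
        have "\<forall>j<i. s1 ! j = t1 ! j"
        proof (intro allI impI)
          fix j assume "j < i"
          then have "\<not> (j < length s1 \<and> s1 ! j \<noteq> t1 ! j)" using not_less_Least[of j] by (auto simp: i_def)
          then show "s1 ! j = t1 ! j" using \<open>j < i\<close> i1 by auto
        qed
        then have "take i s1 = take i t1" using i1 len_st by (intro nth_equalityI) auto
        then show thesis using H i1 by blast
      qed
      have fs: "is_factor w s1" "is_factor w t1"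
        using fu fv us vt by (auto dest!: is_factor_Cons is_factor_snoc)
      have si: "s1 ! i = 0 \<or> s1 ! i = 1" "t1 ! i = 0 \<or> t1 ! i = 1"
        using factor_letters[OF st fs(1), of i] factor_letters[OF st fs(2), of i] i len_st by auto
      define p where "p = take i s1"
      have sdec: "s1 = p @ [s1 ! i] @ drop (Suc i) s1" using i(1) unfolding p_def by (metis id_take_nth_drop append_Cons append_Nil)
      have tdec: "t1 = p @ [t1 ! i] @ drop (Suc i) t1" using i len_st by (simp add: p_def i(3) id_take_nth_drop)
      show False
      proof (cases "s1 ! i = 1")
        case True
        then have t0: "t1 ! i = 0" using si i by auto
        have "take (i + 2) u = 1 # take (Suc i) s1" using us i(1) by simp
        also have "\<dots> = 1 # p @ [1]" using True i(1) by (simp add: p_def take_Suc_conv_app_nth)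
        finally have A: "take (i + 2) u = 1 # p @ [1]" .
        have "take (i + 2) v = 0 # take (Suc i) t1" using vt i(1) len_st by simp
        also have "\<dots> = 0 # p @ [0]" using t0 i(1) len_st i(3) by (simp add: p_def take_Suc_conv_app_nth)
        finally have B: "take (i + 2) v = 0 # p @ [0]" .
        from A B
        have "is_factor w (1 # p @ [1])" "is_factor w (0 # p @ [0])"
          using is_factor_take[OF fu, of "i+2"] is_factor_take[OF fv, of "i+2"] by auto
        then show False using nz by blast
      next
        case False
        then have s0: "s1 ! i = 0" and t1: "t1 ! i = 1" using si i by auto
        define s' where "s' = drop (Suc i) s1"
        define t' where "t' = drop (Suc i) t1"
        have "drop (i + 2) u = s' @ [1]" using us i(1) by (simp add: s'_def)
        moreover have "drop (i + 2) v = t' @ [0]" using vt i(1) len_st by (simp add: t'_def)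
        ultimately have f': "is_factor w (s' @ [1])" "is_factor w (t' @ [0])"
          using is_factor_drop[OF fu, of "i+2"] is_factor_drop[OF fv, of "i+2"] by auto
        have "sum_list s1 = sum_list p + sum_list s'" using sdec s0 by (metis s'_def sum_list_append add_0 sum_list.Cons sum_list.Nil)
        moreover have "sum_list t1 = sum_list p + 1 + sum_list t'" using tdec t1
          by (metis t'_def sum_list_append sum_list.Cons sum_list.Nil add.assoc add.right_neutral)
        ultimately have "sum_list (t' @ [0]) + 2 \<le> sum_list (s' @ [1])" using sum_st by simp
        moreover have "length (s' @ [1]) = length (t' @ [0])" using len_st by (simp add: s'_def t'_def)
        moreover have "length (s' @ [1]) < N" using lu us i by (simp add: s'_def)
        ultimately show False using IH[OF f'] nz by blast
      qed
    qed
  qed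
qed

lemma balanced:
  assumes "is_factor w u" "is_factor w v" "length u = length v"
  shows "sum_list u \<le> sum_list v + 1"
proof (rule ccontr)
  assume "\<not> ?thesis"
  then have "sum_list v + 2 \<le> sum_list u" by simp
  then have "\<exists>z. is_factor w (1 # z @ [1]) \<and> is_factor w (0 # z @ [0])"
    using unbalanced_pair[of "length u"] assms by simp
  then obtain z where z: "is_factor w (1 # z @ [1])" "is_factor w (0 # z @ [0])" by blast
  have "bispecial w z" unfolding bispecial_def left_special_def right_special_def
    using z is_factor_snoc[of w "1 # z" 1] is_factor_snoc[of w "0 # z" 0]
      is_factor_Cons[of w 1 "z @ [1]"] is_factor_Cons[of w 0 "z @ [0]"] by simp
  then have "PP w z" by (rule bispecial_PP)
  then have "is_factor w (0 # z @ [1])" "is_factor w (1 # z @ [0])" unfolding PP_def[OF st] by auto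
  then show False using ext_le3[OF st, of z] z by blast
qed

end


definition hh :: "(nat \<Rightarrow> nat) \<Rightarrow> nat \<Rightarrow> nat \<Rightarrow> nat" where
  "hh w k n = (\<Sum>i<k. w (n+i))"

definition amin :: "(nat \<Rightarrow> nat) \<Rightarrow> nat \<Rightarrow> nat" where
  "amin w k = Min (range (hh w k))"

definition alpha :: "(nat \<Rightarrow> nat) \<Rightarrow> real" where
  "alpha w = Sup ((\<lambda>k. real (amin w k) / real k) ` {1..})"

definition ff :: "(nat \<Rightarrow> nat) \<Rightarrow> nat \<Rightarrow> real" where
  "ff w n = real (hh w n 0) - real n * alpha w"

lemma hh_0[simp]: "hh w 0 n = 0" by (simp add: hh_def)

lemma hh_Suc: "hh w (Suc k) n = hh w k n + w (n + k)"
  by (simp add: hh_def)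

lemma hh_add: "hh w (k + l) n = hh w k n + hh w l (n + k)"
  by (induction l) (simp_all add: hh_Suc algebra_simps)

lemma hh_Suc': "hh w (Suc k) n = w n + hh w k (Suc n)"
  using hh_add[of w 1 k n] by (simp add: hh_def)

lemma sum_list_factor_at: "sum_list (factor_at w n k) = hh w k n"
  by (induction k) (simp_all add: factor_at_Suc hh_Suc)

context
  fixes w :: "nat \<Rightarrow> nat"
  assumes st: "sturmian w"
begin

lemma bal: "hh w k n \<le> hh w k m + 1"
  using balanced[OF st, of "factor_at w n k" "factor_at w m k"] by (simp add: sum_list_factor_at)

lemma hh_le: "hh w k n \<le> k"
proof -
  have "hh w k n \<le> (\<Sum>i<k. 1)" unfolding hh_def by (rule sum_mono) (use bin[OF st] in \<open>metis le_refl less_one less_or_eq_imp_le zero_less_one\<close>)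
  then show ?thesis by simp
qed

lemma fin_range: "finite (range (hh w k))"
  by (rule finite_subset[of _ "{..k}"]) (auto simp: hh_le)

lemma amin_le: "amin w k \<le> hh w k n"
  unfolding amin_def using fin_range by (intro Min_le) auto

lemma amin_attained: "\<exists>n. hh w k n = amin w k"
proof -
  have "amin w k \<in> range (hh w k)" unfolding amin_def using fin_range by (intro Min_in) auto
  then show ?thesis by auto
qed

lemma hh_le_amin: "hh w k n \<le> amin w k + 1"
  using amin_attained[of k] bal[of k n] by metis

lemma amin_super: "amin w k + amin w l \<le> amin w (k + l)"
proof -
  obtain n where "hh w (k+l) n = amin w (k+l)" using amin_attained by blast
  moreover have "hh w (k+l) n = hh w k n + hh w l (n+k)" by (rule hh_add)
  ultimately show ?thesis using amin_le[of k n] amin_le[of l "n+k"] by linarith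
qed

lemma amin_sub: "amin w (k + l) \<le> amin w k + amin w l + 1"
proof -
  obtain n where n: "hh w k n = amin w k" using amin_attained by blast
  have "amin w (k+l) \<le> hh w (k+l) n" by (rule amin_le)
  also have "\<dots> = hh w k n + hh w l (n+k)" by (rule hh_add)
  finally show ?thesis using n hh_le_amin[of l "n+k"] by linarith
qed

lemma amin_mult1: "j * amin w m \<le> amin w (j * m)"
proof (induction j)
  case (Suc j)
  have "amin w (j*m) + amin w m \<le> amin w (j*m + m)" by (rule amin_super)
  then show ?case using Suc by (simp add: add.commute)
qed simp

lemma amin_mult2: "amin w (j * k) + 1 \<le> j * (amin w k + 1)" if "j \<ge> 1"
  using that
proof (induction j)
  case (Suc j)
  show ?case
  proof (cases "j = 0")
    case True then show ?thesis by simp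
  next
    case False
    then have IH: "amin w (j * k) + 1 \<le> j * (amin w k + 1)" using Suc by simp
    have "amin w (j*k + k) \<le> amin w (j*k) + amin w k + 1" by (rule amin_sub)
    then show ?thesis using IH by (simp add: add.commute)
  qed
qed simp

lemma amin_ratio: "k \<ge> 1 \<Longrightarrow> m \<ge> 1 \<Longrightarrow> k * amin w m < m * (amin w k + 1)"
  using amin_mult1[of k m] amin_mult2[of m k] by (simp add: mult.commute)

lemma amin_le_k: "amin w k \<le> k"
  using amin_le[of k 0] hh_le[of k 0] by simp


lemma ratio_set: "(\<lambda>k. real (amin w k) / real k) ` {1..} \<noteq> {}" "bdd_above ((\<lambda>k. real (amin w k) / real k) ` {1..})"
proof -
  show "(\<lambda>k. real (amin w k) / real k) ` {1..} \<noteq> {}" by simp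
  show "bdd_above ((\<lambda>k. real (amin w k) / real k) ` {1..})"
  proof (rule bdd_aboveI[of _ 1])
    fix x assume "x \<in> (\<lambda>k. real (amin w k) / real k) ` {1..}"
    then obtain k where k: "k \<ge> 1" "x = real (amin w k) / real k" by auto
    then show "x \<le> 1" using amin_le_k[of k] by (simp add: divide_le_eq)
  qed
qed

lemma alpha_lower: "k \<ge> 1 \<Longrightarrow> real (amin w k) \<le> real k * (alpha w)"
proof -
  assume k: "k \<ge> 1"
  have "real (amin w k) / real k \<le> (alpha w)" unfolding alpha_def using k ratio_set by (intro cSup_upper) auto
  then show ?thesis using k by (simp add: divide_le_eq mult.commute)
qed

lemma alpha_upper: "k \<ge> 1 \<Longrightarrow> real k * (alpha w) \<le> real (amin w k) + 1"
proof -
  assume k: "k \<ge> 1"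
  have "(alpha w) \<le> (real (amin w k) + 1) / real k" unfolding alpha_def
  proof (rule cSup_least)
    show "(\<lambda>k. real (amin w k) / real k) ` {1..} \<noteq> {}" by simp
    fix x assume "x \<in> (\<lambda>k. real (amin w k) / real k) ` {1..}"
    then obtain m where m: "m \<ge> 1" "x = real (amin w m) / real m" by auto
    have "real (k * amin w m) \<le> real (m * (amin w k + 1))" using amin_ratio[OF k m(1)] by linarith
    then have "real k * real (amin w m) \<le> real m * (real (amin w k) + 1)" by (simp add: algebra_simps)
    moreover have mk: "real m > 0" "real k > 0" using m k by auto
    moreover have xm: "x * real m = real (amin w m)" using m mk by simp
    ultimately have "(x * real k) * real m \<le> (real (amin w k) + 1) * real m"
      by (metis mult.commute mult.left_commute)
    then have "x * real k \<le> real (amin w k) + 1" using mk by simp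
    then show "x \<le> (real (amin w k) + 1) / real k" using mk by (simp add: le_divide_eq)
  qed
  then show ?thesis using k by (simp add: le_divide_eq mult.commute)
qed

lemma hh_alpha: "\<bar>real (hh w k n) - real k * (alpha w)\<bar> \<le> 1"
proof (cases "k = 0")
  case True then show ?thesis by simp
next
  case False
  then have k: "k \<ge> 1" by simp
  have "real (amin w k) \<le> real (hh w k n)" using amin_le by simp
  moreover have "real (hh w k n) \<le> real (amin w k) + 1" using hh_le_amin[of k n] by linarith
  ultimately show ?thesis using alpha_lower[OF k] alpha_upper[OF k] by linarith
qed


lemma ff_0: "ff w 0 = 0" by (simp add: ff_def)

lemma ff_diff: "m \<le> n \<Longrightarrow> ff w n - ff w m = real (hh w (n - m) m) - real (n - m) * (alpha w)"
proof -
  assume "m \<le> n"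
  then have "hh w n 0 = hh w m 0 + hh w (n - m) m" using hh_add[of w m "n-m" 0] by simp
  then show ?thesis using \<open>m \<le> n\<close> by (simp add: ff_def of_nat_diff algebra_simps)
qed

lemma ff_bound: "\<bar>ff w n - ff w m\<bar> \<le> 1"
proof (cases "m \<le> n")
  case True then show ?thesis using ff_diff[OF True] hh_alpha[of "n-m" m] by simp
next
  case False
  then have "n \<le> m" by simp
  then show ?thesis using ff_diff[of n m] hh_alpha[of "m - n" n] by (simp add: abs_minus_commute)
qed

lemma letter_ff: "real (w n) = ff w (Suc n) - ff w n + (alpha w)"
  by (simp add: ff_def hh_Suc algebra_simps)

lemma ff_int: "ff w n + real n * (alpha w) = real (hh w n 0)"
  by (simp add: ff_def)

end


definition gam :: "(nat \<Rightarrow> nat) \<Rightarrow> real" where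
  "gam w = Inf (range (ff w))"

context
  fixes w :: "nat \<Rightarrow> nat"
  assumes st: "sturmian w"
begin


lemma hh_mult_lower: "(\<forall>n. hh w Q n \<ge> P) \<Longrightarrow> hh w (j * Q) m \<ge> j * P"
proof (induction j arbitrary: m)
  case (Suc j)
  have "hh w (Suc j * Q) m = hh w Q m + hh w (j * Q) (m + Q)" using hh_add[of w Q "j*Q" m] by (simp add: add.commute)
  moreover have "P \<le> hh w Q m" using Suc.prems by blast
  moreover have "j * P \<le> hh w (j*Q) (m+Q)" using Suc.IH[of "m+Q"] Suc.prems by blast
  ultimately show ?case unfolding mult_Suc by linarith
qed simp

lemma hh_mult_upper: "(\<forall>n. hh w Q n \<le> P) \<Longrightarrow> hh w (j * Q) m \<le> j * P"
proof (induction j arbitrary: m)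
  case (Suc j)
  have "hh w (Suc j * Q) m = hh w Q m + hh w (j * Q) (m + Q)" using hh_add[of w Q "j*Q" m] by (simp add: add.commute)
  moreover have "hh w Q m \<le> P" using Suc.prems by blast
  moreover have "hh w (j*Q) (m+Q) \<le> j * P" using Suc.IH[of "m+Q"] Suc.prems by blast
  ultimately show ?case unfolding mult_Suc by linarith
qed simp

lemma hh_three: "t \<ge> 1 \<Longrightarrow> hh w (Suc t * Q) n = hh w Q n + hh w ((t - 1) * Q) (n + Q) + hh w Q (n + t * Q)"
proof -
  assume t: "t \<ge> 1"
  have "Suc t * Q = Q + ((t - 1) * Q + Q)" using t by (simp add: algebra_simps)
  then have A: "hh w (Suc t * Q) n = hh w Q n + (hh w ((t-1)*Q) (n + Q) + hh w Q (n + Q + (t-1)*Q))"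
    by (simp only: hh_add)
  have idx: "n + Q + (t - 1) * Q = n + t * Q" using t by (cases t) (simp_all add: algebra_simps)
  show ?thesis using A unfolding idx by (simp only: add.assoc)
qed

lemma alpha_irrational: "(alpha w) \<notin> \<rat>"
proof
  assume "(alpha w) \<in> \<rat>"
  then obtain p q where q: "q > 0" and pq: "(alpha w) = of_int p / of_int q"
    by (auto elim!: Rats_cases')
  define Q where "Q = nat q"
  have Q: "Q \<ge> 1" "real Q = of_int q" using q by (auto simp: Q_def)
  have Qa: "real Q * (alpha w) = of_int p" using Q q pq by simp
  have lo: "real (amin w Q) \<le> of_int p" using alpha_lower[OF st Q(1)] Qa by simp
  have up: "of_int p \<le> real (amin w Q) + 1" using alpha_upper[OF st Q(1)] Qa by simp
  define P where "P = amin w Q"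
  have pcases: "p = int P \<or> p = int P + 1" using lo up unfolding P_def by linarith
  define p' where "p' = nat p"
  have pp': "p = int p'" using pcases by (auto simp: p'_def)
  define E where "E = {n. hh w Q n \<noteq> p'}"
  have Kbound: "\<bar>real (hh w (Suc t * Q) n) - real (Suc t) * real p'\<bar> \<le> 1" for t n
  proof -
    have "real (Suc t * Q) * (alpha w) = real (Suc t) * (real Q * alpha w)"
      by (simp only: of_nat_mult mult.assoc)
    also have "\<dots> = real (Suc t) * real p'" using Qa pp' by simp
    finally have "real (Suc t * Q) * (alpha w) = real (Suc t) * real p'" .
    then show ?thesis using hh_alpha[OF st, of "Suc t * Q" n] by simp
  qed
  have twoE: "False" if "n \<in> E" "n + t * Q \<in> E" "t \<ge> 1" for n t
  proof (cases "p = int P")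
    case True
    then have p'P: "p' = P" using pp' by simp
    have ge: "\<forall>n. hh w Q n \<ge> P" using amin_le[OF st] by (simp add: P_def)
    have "hh w Q n \<noteq> P" "hh w Q (n + t * Q) \<noteq> P" using that p'P by (auto simp: E_def)
    then have e1: "hh w Q n \<ge> P + 1" "hh w Q (n + t * Q) \<ge> P + 1"
      using ge[rule_format, of n] ge[rule_format, of "n + t * Q"] by linarith+
    have "hh w ((t - 1) * Q) (n + Q) \<ge> (t - 1) * P" by (rule hh_mult_lower[OF ge])
    then have "hh w (Suc t * Q) n \<ge> (P + 1) + (t - 1) * P + (P + 1)"
      using hh_three[OF that(3), of Q n] e1 by linarith
    moreover have "(P + 1) + (t - 1) * P + (P + 1) = Suc t * P + 2" using that(3)
      by (cases t) (auto simp: algebra_simps)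
    ultimately have "hh w (Suc t * Q) n \<ge> Suc t * P + 2" by linarith
    then have "real (hh w (Suc t * Q) n) \<ge> real (Suc t * P + 2)" by (simp only: of_nat_le_iff)
    then have "real (hh w (Suc t * Q) n) \<ge> real (Suc t) * real P + 2" by (simp add: algebra_simps)
    moreover have "\<bar>real (hh w (Suc t * Q) n) - real (Suc t) * real P\<bar> \<le> 1"
      using Kbound[of t n] p'P by simp
    ultimately show False by linarith
  next
    case False
    then have p'P: "p' = P + 1" using pp' pcases by simp
    have le: "\<forall>n. hh w Q n \<le> P + 1" using hh_le_amin[OF st] by (simp add: P_def)
    have "hh w Q n \<noteq> P + 1" "hh w Q (n + t * Q) \<noteq> P + 1" using that p'P by (auto simp: E_def)
    then have e1: "hh w Q n \<le> P" "hh w Q (n + t * Q) \<le> P"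
      using le[rule_format, of n] le[rule_format, of "n + t * Q"] by linarith+
    have "hh w ((t - 1) * Q) (n + Q) \<le> (t - 1) * (P + 1)" by (rule hh_mult_upper[OF le])
    then have "hh w (Suc t * Q) n \<le> P + (t - 1) * (P + 1) + P"
      using hh_three[OF that(3), of Q n] e1 by linarith
    moreover have "P + (t - 1) * (P + 1) + P + 2 = Suc t * (P + 1)" using that(3)
      by (cases t) (auto simp: algebra_simps)
    ultimately have "hh w (Suc t * Q) n + 2 \<le> Suc t * (P + 1)" by linarith
    then have "real (hh w (Suc t * Q) n + 2) \<le> real (Suc t * (P + 1))" by (simp only: of_nat_le_iff)
    then have "real (hh w (Suc t * Q) n) + 2 \<le> real (Suc t) * (real P + 1)" by (simp add: algebra_simps)
    moreover have "\<bar>real (hh w (Suc t * Q) n) - real (Suc t) * (real P + 1)\<bar> \<le> 1"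
      using Kbound[of t n] p'P by (simp add: add.commute)
    ultimately show False by linarith
  qed
  have inj: "inj_on (\<lambda>n. n mod Q) E"
  proof (rule inj_onI)
    fix n n' assume nE: "n \<in> E" "n' \<in> E" and md: "n mod Q = n' mod Q"
    show "n = n'"
    proof (rule ccontr)
      assume "n \<noteq> n'"
      then consider "n < n'" | "n' < n" by linarith
      then show False
      proof cases
        case 1
        have "Q dvd n' - n" using md 1 mod_eq_dvd_iff_nat[of n n' Q] by simp
        then obtain t where "n' - n = Q * t" by (elim dvdE)
        then have eq: "n' = n + t * Q" using 1 by (simp add: mult.commute)
        have "t \<ge> 1" using eq 1 by (cases t) auto
        then show False using twoE[of n t] nE eq by simp
      next
        case 2
        have "Q dvd n - n'" using md 2 mod_eq_dvd_iff_nat[of n' n Q] by simp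
        then obtain t where "n - n' = Q * t" by (elim dvdE)
        then have eq: "n = n' + t * Q" using 2 by (simp add: mult.commute)
        have "t \<ge> 1" using eq 2 by (cases t) auto
        then show False using twoE[of n' t] nE eq by simp
      qed
    qed
  qed
  have "finite E"
    by (rule inj_on_finite[OF inj, of "{..<Q}"]) (use Q in auto)
  then obtain M where M: "\<forall>n\<in>E. n < M" using finite_nat_set_iff_bounded by blast
  have "\<forall>n\<ge>M. w (n + Q) = w n"
  proof (intro allI impI)
    fix n assume "n \<ge> M"
    then have "n \<notin> E" "Suc n \<notin> E" using M by auto
    then have "hh w Q n = hh w Q (Suc n)" by (simp add: E_def)
    moreover have "hh w (Suc Q) n = hh w Q n + w (n + Q)" by (simp add: hh_Suc)
    moreover have "hh w (Suc Q) n = w n + hh w Q (Suc n)" by (simp add: hh_Suc')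
    ultimately show "w (n + Q) = w n" by simp
  qed
  then show False using not_evper[OF st, of Q M] Q by simp
qed

lemma alpha_bounds: "0 < (alpha w)" "(alpha w) < 1"
proof -
  have "real (amin w 1) \<le> (alpha w)" using alpha_lower[OF st, of 1] by simp
  then have a0: "0 \<le> (alpha w)" by linarith
  obtain n where "factor_at w n 1 = [0]" using F1[OF st, of 0] by (auto simp: is_factor_def)
  then have "w n = 0" by (simp add: factor_at_def)
  then have "amin w 1 = 0" using amin_le[OF st, of 1 n] by (simp add: hh_def)
  then have a1: "(alpha w) \<le> 1" using alpha_upper[OF st, of 1] by simp
  have "(alpha w) \<noteq> 0" "(alpha w) \<noteq> 1" using alpha_irrational by auto
  then show "0 < (alpha w)" "(alpha w) < 1" using a0 a1 by auto
qed

lemma not_int_multiple: "n \<noteq> m \<Longrightarrow> (real n - real m) * (alpha w) \<noteq> of_int z"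
proof
  assume nm: "n \<noteq> m" and eq: "(real n - real m) * (alpha w) = of_int z"
  have "real n - real m \<noteq> 0" using nm by simp
  then have "(alpha w) = of_int z / (real n - real m)" using eq by (simp add: field_simps)
  also have "\<dots> \<in> \<rat>" by (intro Rats_divide) (auto intro: Rats_diff)
  finally show False using alpha_irrational by simp
qed

lemma ff_diff_int: "ff w n - ff w m = of_int (int (hh w n 0) - int (hh w m 0)) - (real n - real m) * (alpha w)"
  by (simp add: ff_def algebra_simps)

lemma ff_strict: "n \<noteq> m \<Longrightarrow> \<bar>ff w n - ff w m\<bar> < 1"
proof -
  assume nm: "n \<noteq> m"
  have "\<bar>ff w n - ff w m\<bar> \<le> 1" by (rule ff_bound[OF st])
  moreover have "\<bar>ff w n - ff w m\<bar> \<noteq> 1"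
  proof
    assume "\<bar>ff w n - ff w m\<bar> = 1"
    then have "ff w n - ff w m = 1 \<or> ff w n - ff w m = -1" by linarith
    then obtain c :: int where "ff w n - ff w m = of_int c" by (metis of_int_1 of_int_minus)
    then have "(real n - real m) * (alpha w) = of_int (int (hh w n 0) - int (hh w m 0) - c)"
      using ff_diff_int[of n m] by simp
    then show False using not_int_multiple[OF nm] by blast
  qed
  ultimately show ?thesis by simp
qed

lemma ff_inj: "n \<noteq> m \<Longrightarrow> ff w n \<noteq> ff w m"
proof
  assume nm: "n \<noteq> m" and "ff w n = ff w m"
  then have "(real n - real m) * (alpha w) = of_int (int (hh w n 0) - int (hh w m 0))"
    using ff_diff_int[of n m] by simp
  then show False using not_int_multiple[OF nm] by blast
qed

lemma bdd_f: "bdd_below (range (ff w))"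
proof (rule bdd_belowI[of _ "-1"])
  fix x assume "x \<in> range (ff w)"
  then obtain n where "x = ff w n" by auto
  then show "-1 \<le> x" using ff_bound[OF st, of n 0] ff_0[OF st] by simp
qed

lemma gam_le: "(gam w) \<le> ff w n"
  unfolding gam_def using bdd_f by (intro cInf_lower) auto

lemma le_gam1: "ff w n \<le> (gam w) + 1"
proof -
  have "ff w n - 1 \<le> (gam w)" unfolding gam_def
  proof (rule cInf_greatest)
    show "range (ff w) \<noteq> {}" by simp
    fix x assume "x \<in> range (ff w)"
    then obtain m where "x = ff w m" by auto
    then show "ff w n - 1 \<le> x" using ff_bound[OF st, of n m] by simp
  qed
  then show ?thesis by simp
qed

lemma not_both: "ff w j = (gam w) \<Longrightarrow> ff w j' = (gam w) + 1 \<Longrightarrow> False"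
proof -
  assume a: "ff w j = (gam w)" "ff w j' = (gam w) + 1"
  show False
  proof (cases "j = j'")
    case True then show False using a by simp
  next
    case False then show False using ff_strict[of j' j] a by simp
  qed
qed

lemma ff_mod: "ff w (m + n) - ff w m - ff w n = of_int (int (hh w (m+n) 0) - int (hh w m 0) - int (hh w n 0))"
  by (simp add: ff_def algebra_simps)

end


lemma dens_pos:
  assumes irr: "a \<notin> \<rat>" and eta: "\<eta> > 0"
  shows "\<exists>N K. N \<ge> 1 \<and> 0 < real N * a - of_int K \<and> real N * a - of_int K < \<eta>"
proof -
  define t where "t = min (\<eta>/2) (1/2)"
  have t: "t > 0" "t \<le> 1" "2 * t \<le> \<eta>" using eta by (auto simp: t_def)
  obtain k where k: "k > 0" "\<bar>frac (real k * a) - t\<bar> < t"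
    using Kronecker_approx_1_explicit[OF irr, of t t] t by auto
  show ?thesis
  proof (intro exI conjI)
    show "k \<ge> 1" using k by simp
    show "0 < real k * a - of_int \<lfloor>real k * a\<rfloor>" using k(2) by (simp add: frac_def)
    show "real k * a - of_int \<lfloor>real k * a\<rfloor> < \<eta>" using k(2) t by (simp add: frac_def)
  qed
qed

lemma dens_neg:
  assumes irr: "a \<notin> \<rat>" and eta: "\<eta> > 0"
  shows "\<exists>N K. N \<ge> 1 \<and> - \<eta> < real N * a - of_int K \<and> real N * a - of_int K < 0"
proof -
  define t where "t = min (\<eta>/2) (1/2)"
  have t: "t > 0" "t \<le> 1/2" "2 * t \<le> \<eta>" using eta by (auto simp: t_def)
  obtain k where k: "k > 0" "\<bar>frac (real k * a) - (1 - t)\<bar> < t"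
    using Kronecker_approx_1_explicit[OF irr, of "1 - t" t] t by auto
  have fr: "frac (real k * a) < 1" by (rule frac_lt_1)
  show ?thesis
  proof (intro exI conjI)
    show "k \<ge> 1" using k by simp
    show "- \<eta> < real k * a - of_int (\<lfloor>real k * a\<rfloor> + 1)" using k(2) t by (simp add: frac_def)
    show "real k * a - of_int (\<lfloor>real k * a\<rfloor> + 1) < 0" using fr by (simp add: frac_def)
  qed
qed

lemma int_diff_zero: "\<bar>x - y\<bar> < 1 \<Longrightarrow> x - y = of_int z \<Longrightarrow> x = (y::real)"
proof -
  assume a: "\<bar>x - y\<bar> < 1" "x - y = of_int z"
  then have "\<bar>of_int z :: real\<bar> < 1" by simp
  then have "z = 0" by linarith
  then show ?thesis using a by simp
qed

context
  fixes w :: "nat \<Rightarrow> nat"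
  assumes st: "sturmian w"
begin

lemma shift_match:
  assumes "\<forall>i\<le>L. ff w (m' + i) = ff w (m + i) + s"
  shows "factor_at w m' L = factor_at w m L"
proof (simp add: factor_at_eq_iff, intro allI impI)
  fix i assume "i < L"
  have "real (w (m' + i)) = ff w (Suc (m' + i)) - ff w (m' + i) + alpha w" by (rule letter_ff[OF st])
  also have "\<dots> = ff w (Suc (m + i)) - ff w (m + i) + alpha w"
    using assms \<open>i < L\<close> by (simp add: add_Suc_right[symmetric] del: add_Suc_right)
  also have "\<dots> = real (w (m + i))" by (rule letter_ff[OF st, symmetric])
  finally show "w (m' + i) = w (m + i)" by simp
qed

lemma ff_shift_int: "\<exists>z. ff w (a + N) - (ff w a - (real N * alpha w - of_int K)) = of_int z"
proof -
  have "ff w (a + N) - (ff w a - (real N * alpha w - of_int K)) =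
        of_int (int (hh w (a+N) 0) - int (hh w a 0) - K)"
    by (simp add: ff_def algebra_simps)
  then show ?thesis by blast
qed

lemma shifted_eq:
  assumes "\<bar>ff w (a + N) - (ff w a - (real N * alpha w - of_int K))\<bar> < 1"
  shows "ff w (a + N) = ff w a - (real N * alpha w - of_int K)"
  using ff_shift_int[of a N K] int_diff_zero assms by blast

lemma range_ff: "gam w \<le> ff w n" "ff w n \<le> gam w + 1"
  using gam_le[OF st] le_gam1[OF st] by auto

lemma char_word_eq:
  assumes LS: "\<forall>k. left_special w (factor_at x0 0 k)" and orb: "x0 \<in> orbit_closure w"
  shows "characteristic_word w = x0"
  unfolding characteristic_word_def
proof (rule the_equality)
  show "x0 \<in> orbit_closure w \<and> (\<forall>k. left_special w (factor_at x0 0 k))" using LS orb by simp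
  fix y assume y: "y \<in> orbit_closure w \<and> (\<forall>k. left_special w (factor_at y 0 k))"
  show "y = x0"
  proof
    fix i
    have eq: "factor_at y 0 (Suc i) = factor_at x0 0 (Suc i)"
      using LS_unique[OF st] y LS by simp
    have "y i = factor_at y 0 (Suc i) ! i" by simp
    also have "\<dots> = factor_at x0 0 (Suc i) ! i" using eq by simp
    also have "\<dots> = x0 i" by simp
    finally show "y i = x0 i" .
  qed
qed

lemma orbit_shift: "shift n w \<in> orbit_closure w"
  unfolding orbit_closure_def by auto

lemma min_case:
  assumes fj: "ff w j = gam w"
  shows "characteristic_word w = shift (Suc j) w"
proof (rule char_word_eq[OF _ orbit_shift])
  have a: "0 < alpha w" "alpha w < 1" using alpha_bounds[OF st] by auto
  have wj: "w j = 1"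
  proof -
    have "real (w j) = ff w (Suc j) - ff w j + alpha w" by (rule letter_ff[OF st])
    then have "real (w j) > 0" using range_ff(1)[of "Suc j"] fj a by linarith
    then show ?thesis using bin[OF st, of j] by auto
  qed
  show "\<forall>k. left_special w (factor_at (shift (Suc j) w) 0 k)"
  proof
    fix k
    have fa: "factor_at (shift (Suc j) w) 0 k = factor_at w (Suc j) k" by (simp add: factor_at_shift)
    have one: "is_factor w (1 # factor_at w (Suc j) k)"
      using is_factor_at[of w j "Suc k"] wj by (simp add: factor_at_Suc')
    have gt: "ff w (j + i) > gam w" if "i \<ge> 1" for i
      using range_ff(1)[of "j+i"] ff_inj[OF st, of "j+i" j] fj that by force
    have lt1: "ff w n < gam w + 1" for n
      using range_ff(2)[of n] not_both[OF st fj, of n] by force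
    define \<eta> where "\<eta> = Min ((\<lambda>i. ff w (j + i) - gam w) ` {1..Suc k})"
    have \<eta>: "\<eta> > 0" unfolding \<eta>_def using gt by (subst Min_gr_iff) auto
    have \<eta>le: "\<eta> \<le> ff w (j + i) - gam w" if "i \<in> {1..Suc k}" for i
      unfolding \<eta>_def using that by (intro Min_le) auto
    obtain N K where NK: "N \<ge> 1" "0 < real N * alpha w - of_int K" "real N * alpha w - of_int K < \<eta>"
      using dens_pos[OF alpha_irrational[OF st] \<eta>] by blast
    define \<delta> where "\<delta> = real N * alpha w - of_int K"
    have sh: "ff w (j + i + N) = ff w (j + i) - \<delta>" if "i \<in> {1..Suc k}" for i
    proof (rule shifted_eq[of "j+i" N K, folded \<delta>_def])
      have "ff w (j + i) - \<delta> > gam w" using \<eta>le[OF that] NK by (simp add: \<delta>_def)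
      moreover have "ff w (j + i) - \<delta> < gam w + 1" using lt1[of "j+i"] NK by (simp add: \<delta>_def)
      ultimately show "\<bar>ff w (j + i + N) - (ff w (j + i) - \<delta>)\<bar> < 1"
        using range_ff[of "j+i+N"] by linarith
    qed
    have sh0: "ff w (j + N) = gam w - \<delta> + 1"
    proof -
      obtain z where z: "ff w (j + N) - (ff w j - \<delta>) = of_int z" using ff_shift_int[of j N K] by (auto simp: \<delta>_def)
      have "ff w (j + N) - (gam w - \<delta> + 1) = of_int (z - 1)" using z fj by simp
      moreover have "\<bar>ff w (j + N) - (gam w - \<delta> + 1)\<bar> < 1"
        using range_ff(1)[of "j+N"] lt1[of "j+N"] NK \<eta> \<eta>le[of 1] range_ff(2)[of "j+1"] by (simp add: \<delta>_def)
      ultimately show ?thesis using int_diff_zero by blast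
    qed
    have wN: "w (j + N) = 0"
    proof -
      have "real (w (j + N)) = ff w (Suc (j + N)) - ff w (j + N) + alpha w" by (rule letter_ff[OF st])
      also have "ff w (Suc (j + N)) = ff w (Suc j) - \<delta>" using sh[of 1] by simp
      finally have "real (w (j + N)) = ff w (Suc j) - gam w - 1 + alpha w" using sh0 by simp
      also have "\<dots> = real (w j) - 1" using letter_ff[OF st, of j] fj by simp
      finally show ?thesis using wj by simp
    qed
    have "factor_at w (Suc (j + N)) k = factor_at w (Suc j) k"
    proof (rule shift_match)
      show "\<forall>i\<le>k. ff w (Suc (j + N) + i) = ff w (Suc j + i) + (- \<delta>)"
      proof (intro allI impI)
        fix i assume "i \<le> k"
        then have "Suc i \<in> {1..Suc k}" by simp
        from sh[OF this] show "ff w (Suc (j + N) + i) = ff w (Suc j + i) + (- \<delta>)" by (simp add: algebra_simps)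
      qed
    qed
    then have "factor_at w (j + N) (Suc k) = 0 # factor_at w (Suc j) k"
      using wN by (simp add: factor_at_Suc')
    then have zero: "is_factor w (0 # factor_at w (Suc j) k)" by (metis is_factor_at)
    show "left_special w (factor_at (shift (Suc j) w) 0 k)"
      unfolding fa left_special_def using zero one by simp
  qed
qed

lemma max_case:
  assumes fj: "ff w j = gam w + 1"
  shows "characteristic_word w = shift (Suc j) w"
proof (rule char_word_eq[OF _ orbit_shift])
  have a: "0 < alpha w" "alpha w < 1" using alpha_bounds[OF st] by auto
  have wj: "w j = 0"
  proof -
    have "real (w j) = ff w (Suc j) - ff w j + alpha w" by (rule letter_ff[OF st])
    then have "real (w j) < 1" using range_ff(2)[of "Suc j"] fj a by linarith
    then show ?thesis using bin[OF st, of j] by auto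
  qed
  show "\<forall>k. left_special w (factor_at (shift (Suc j) w) 0 k)"
  proof
    fix k
    have fa: "factor_at (shift (Suc j) w) 0 k = factor_at w (Suc j) k" by (simp add: factor_at_shift)
    have zero: "is_factor w (0 # factor_at w (Suc j) k)"
      using is_factor_at[of w j "Suc k"] wj by (simp add: factor_at_Suc')
    have lt: "ff w (j + i) < gam w + 1" if "i \<ge> 1" for i
      using range_ff(2)[of "j+i"] ff_inj[OF st, of "j+i" j] fj that by force
    have gt0: "ff w n > gam w" for n
      using range_ff(1)[of n] not_both[OF st _ fj, of n] by force
    define \<eta> where "\<eta> = Min ((\<lambda>i. gam w + 1 - ff w (j + i)) ` {1..Suc k})"
    have \<eta>: "\<eta> > 0" unfolding \<eta>_def using lt by (subst Min_gr_iff) auto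
    have \<eta>le: "\<eta> \<le> gam w + 1 - ff w (j + i)" if "i \<in> {1..Suc k}" for i
      unfolding \<eta>_def using that by (intro Min_le) auto
    obtain N K where NK: "N \<ge> 1" "- \<eta> < real N * alpha w - of_int K" "real N * alpha w - of_int K < 0"
      using dens_neg[OF alpha_irrational[OF st] \<eta>] by blast
    define \<delta> where "\<delta> = real N * alpha w - of_int K"
    have sh: "ff w (j + i + N) = ff w (j + i) - \<delta>" if "i \<in> {1..Suc k}" for i
    proof (rule shifted_eq[of "j+i" N K, folded \<delta>_def])
      have "ff w (j + i) - \<delta> < gam w + 1" using \<eta>le[OF that] NK by (simp add: \<delta>_def)
      moreover have "ff w (j + i) - \<delta> > gam w" using gt0[of "j+i"] NK by (simp add: \<delta>_def)
      ultimately show "\<bar>ff w (j + i + N) - (ff w (j + i) - \<delta>)\<bar> < 1"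
        using range_ff[of "j+i+N"] by linarith
    qed
    have sh0: "ff w (j + N) = gam w - \<delta>"
    proof -
      obtain z where z: "ff w (j + N) - (ff w j - \<delta>) = of_int z" using ff_shift_int[of j N K] by (auto simp: \<delta>_def)
      have "ff w (j + N) - (gam w - \<delta>) = of_int (z + 1)" using z fj by simp
      moreover have "\<bar>ff w (j + N) - (gam w - \<delta>)\<bar> < 1"
        using gt0[of "j+N"] range_ff(2)[of "j+N"] NK \<eta> \<eta>le[of 1] range_ff(1)[of "j+1"] by (simp add: \<delta>_def)
      ultimately show ?thesis using int_diff_zero by blast
    qed
    have wN: "w (j + N) = 1"
    proof -
      have "real (w (j + N)) = ff w (Suc (j + N)) - ff w (j + N) + alpha w" by (rule letter_ff[OF st])
      also have "ff w (Suc (j + N)) = ff w (Suc j) - \<delta>" using sh[of 1] by simp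
      finally have "real (w (j + N)) = ff w (Suc j) - gam w + alpha w" using sh0 by simp
      also have "\<dots> = real (w j) + 1" using letter_ff[OF st, of j] fj by simp
      finally show ?thesis using wj by simp
    qed
    have "factor_at w (Suc (j + N)) k = factor_at w (Suc j) k"
    proof (rule shift_match)
      show "\<forall>i\<le>k. ff w (Suc (j + N) + i) = ff w (Suc j + i) + (- \<delta>)"
      proof (intro allI impI)
        fix i assume "i \<le> k"
        then have "Suc i \<in> {1..Suc k}" by simp
        from sh[OF this] show "ff w (Suc (j + N) + i) = ff w (Suc j + i) + (- \<delta>)" by (simp add: algebra_simps)
      qed
    qed
    then have "factor_at w (j + N) (Suc k) = 1 # factor_at w (Suc j) k"
      using wN by (simp add: factor_at_Suc')
    then have one: "is_factor w (1 # factor_at w (Suc j) k)" by (metis is_factor_at)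
    show "left_special w (factor_at (shift (Suc j) w) 0 k)"
      unfolding fa left_special_def using zero one by simp
  qed
qed

lemma nonsingular_interior:
  assumes ns: "nonsingular w"
  shows "gam w < ff w n" "ff w n < gam w + 1"
proof -
  have "ff w n \<noteq> gam w"
  proof
    assume "ff w n = gam w"
    then have "characteristic_word w = shift (Suc n) w" by (rule min_case)
    then show False using ns by (auto simp: nonsingular_def)
  qed
  moreover have "ff w n \<noteq> gam w + 1"
  proof
    assume "ff w n = gam w + 1"
    then have "characteristic_word w = shift (Suc n) w" by (rule max_case)
    then show False using ns by (auto simp: nonsingular_def)
  qed
  ultimately show "gam w < ff w n" "ff w n < gam w + 1" using range_ff[of n] by auto
qed

lemma bohr_inclusion:
  assumes ns: "nonsingular w"
  shows "\<exists>\<epsilon>>0. \<forall>n (K::int). \<bar>real n * alpha w - of_int K\<bar> < \<epsilon> \<longrightarrow> factor_at w n L = factor_at w 0 L"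
proof -
  define \<epsilon> where "\<epsilon> = Min ((\<lambda>i. min (ff w i - gam w) (gam w + 1 - ff w i)) ` {..L})"
  have pos: "\<epsilon> > 0" unfolding \<epsilon>_def using nonsingular_interior[OF ns] by (subst Min_gr_iff) auto
  have le: "\<epsilon> \<le> ff w i - gam w" "\<epsilon> \<le> gam w + 1 - ff w i" if "i \<le> L" for i
  proof -
    have "\<epsilon> \<le> min (ff w i - gam w) (gam w + 1 - ff w i)" unfolding \<epsilon>_def using that by (intro Min_le) auto
    then show "\<epsilon> \<le> ff w i - gam w" "\<epsilon> \<le> gam w + 1 - ff w i" by auto
  qed
  show ?thesis
  proof (intro exI conjI allI impI)
    show "\<epsilon> > 0" by (rule pos)
    fix n and K :: int
    assume small: "\<bar>real n * alpha w - of_int K\<bar> < \<epsilon>"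
    define \<delta> where "\<delta> = real n * alpha w - of_int K"
    have f0: "ff w 0 = 0" by (rule ff_0[OF st])
    have fn: "ff w n = - \<delta>"
    proof -
      have "ff w (0 + n) = ff w 0 - \<delta>"
      proof (rule shifted_eq[of 0 n K, folded \<delta>_def])
        have "- \<delta> > gam w" "- \<delta> < gam w + 1" using le[of 0] small f0 by (auto simp: \<delta>_def)
        then show "\<bar>ff w (0 + n) - (ff w 0 - \<delta>)\<bar> < 1" using range_ff[of "0+n"] f0 by auto
      qed
      then show ?thesis using f0 by simp
    qed
    have "factor_at w (n + 0) L = factor_at w 0 L"
    proof (rule shift_match)
      show "\<forall>i\<le>L. ff w (n + 0 + i) = ff w (0 + i) + ff w n"
      proof (intro allI impI)
        fix i assume i: "i \<le> L"
        have "ff w (n + i) - (ff w n + ff w i) = of_int (int (hh w (n+i) 0) - int (hh w n 0) - int (hh w i 0))"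
          using ff_mod[OF st, of n i] by simp
        moreover have "\<bar>ff w (n + i) - (ff w n + ff w i)\<bar> < 1"
        proof -
          have "ff w n + ff w i > gam w" "ff w n + ff w i < gam w + 1"
            using le[OF i] small fn by (auto simp: \<delta>_def)
          then show ?thesis using range_ff[of "n+i"] by auto
        qed
        ultimately have "ff w (n + i) = ff w n + ff w i" using int_diff_zero by blast
        then show "ff w (n + 0 + i) = ff w (0 + i) + ff w n" by simp
      qed
    qed
    then show "factor_at w n L = factor_at w 0 L" by simp
  qed
qed

end


section \<open>Simultaneous approximation along IP sums\<close>

lemma floor_eq_close:
  assumes "\<lfloor>M * x\<rfloor> = \<lfloor>M * y\<rfloor>" "M > 0"
  shows "\<bar>x - y\<bar> < 1 / (M::real)"
proof -
  have "\<bar>M * x - M * y\<bar> < 1" using assms(1) by linarith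
  then have "M * \<bar>x - y\<bar> < 1" using assms(2) by (simp add: abs_mult right_diff_distrib[symmetric])
  then show ?thesis using assms(2) by (simp add: field_simps)
qed

lemma ip_bohr:
  fixes y :: "nat \<Rightarrow> nat" and a b \<epsilon> :: real
  assumes eps: "\<epsilon> > 0"
  shows "\<exists>F. finite F \<and> F \<noteq> {} \<and> (\<exists>K1 K2 :: int. \<bar>real (sum y F) * a - of_int K1\<bar> < \<epsilon> \<and> \<bar>real (sum y F) * b - of_int K2\<bar> < \<epsilon>)"
proof -
  obtain M :: nat where M: "1 / real M < \<epsilon>" "M > 0"
    using eps by (metis gr_zeroI inverse_eq_divide real_arch_inverse)
  define S where "S j = sum y {..<j}" for j
  define bx where "bx j = (nat \<lfloor>real M * frac (real (S j) * a)\<rfloor>, nat \<lfloor>real M * frac (real (S j) * b)\<rfloor>)" for j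
  have bx_in: "bx j \<in> {..<M} \<times> {..<M}" for j
  proof -
    have "\<lfloor>real M * frac (real (S j) * c)\<rfloor> < int M" for c
    proof -
      have "real M * frac (real (S j) * c) < real M" using M frac_lt_1 by simp
      then show ?thesis by linarith
    qed
    then show ?thesis by (auto simp: bx_def nat_less_iff)
  qed
  have "\<not> inj_on bx {..M*M}"
  proof
    assume "inj_on bx {..M*M}"
    then have "card (bx ` {..M*M}) = M*M + 1" by (simp add: card_image)
    moreover have "card (bx ` {..M*M}) \<le> card ({..<M} \<times> {..<M})"
      by (rule card_mono) (use bx_in in blast)+
    ultimately show False by (simp add: card_cartesian_product)
  qed
  then obtain j1 j2 where j: "j1 \<noteq> j2" "bx j1 = bx j2" unfolding inj_on_def by blast
  define i1 where "i1 = min j1 j2"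
  define i2 where "i2 = max j1 j2"
  have i: "i1 < i2" "bx i1 = bx i2" using j by (auto simp: i1_def i2_def min_def max_def)
  define F where "F = {i1..<i2}"
  have sumF: "sum y F = S i2 - S i1" "S i1 \<le> S i2"
  proof -
    have "sum y {0..<i2} = sum y {0..<i1} + sum y {i1..<i2}"
      using i by (intro sum.atLeastLessThan_concat[symmetric]) auto
    then show "sum y F = S i2 - S i1" "S i1 \<le> S i2" by (auto simp: S_def F_def atLeast0LessThan)
  qed
  have approx: "\<exists>K::int. \<bar>real (sum y F) * c - of_int K\<bar> < \<epsilon>"
    if "nat \<lfloor>real M * frac (real (S i1) * c)\<rfloor> = nat \<lfloor>real M * frac (real (S i2) * c)\<rfloor>" for c
  proof -
    have "\<lfloor>real M * frac (real (S i1) * c)\<rfloor> = \<lfloor>real M * frac (real (S i2) * c)\<rfloor>"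
      using that by (simp add: frac_ge_0 eq_nat_nat_iff)
    then have "\<bar>frac (real (S i1) * c) - frac (real (S i2) * c)\<bar> < 1 / real M"
      by (rule floor_eq_close) (use M in simp)
    moreover have "real (sum y F) * c = frac (real (S i2) * c) - frac (real (S i1) * c)
        + of_int (\<lfloor>real (S i2) * c\<rfloor> - \<lfloor>real (S i1) * c\<rfloor>)"
      using sumF by (simp add: frac_def of_nat_diff algebra_simps)
    ultimately have "\<bar>real (sum y F) * c - of_int (\<lfloor>real (S i2) * c\<rfloor> - \<lfloor>real (S i1) * c\<rfloor>)\<bar> < 1 / real M"
      by (simp add: abs_minus_commute)
    then have "\<bar>real (sum y F) * c - of_int (\<lfloor>real (S i2) * c\<rfloor> - \<lfloor>real (S i1) * c\<rfloor>)\<bar> < \<epsilon>"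
      using M by linarith
    then show ?thesis by blast
  qed
  show ?thesis
  proof (rule exI[of _ F], intro conjI)
    show "finite F" "F \<noteq> {}" using i by (auto simp: F_def)
    obtain K1 where "\<bar>real (sum y F) * a - of_int K1\<bar> < \<epsilon>" using approx[of a] i(2) by (auto simp: bx_def)
    moreover obtain K2 where "\<bar>real (sum y F) * b - of_int K2\<bar> < \<epsilon>" using approx[of b] i(2) by (auto simp: bx_def)
    ultimately show "\<exists>K1 K2 :: int. \<bar>real (sum y F) * a - of_int K1\<bar> < \<epsilon> \<and> \<bar>real (sum y F) * b - of_int K2\<bar> < \<epsilon>"
      by blast
  qed
qed

lemma IP_star_infinite: "IP_star A \<Longrightarrow> infinite A"
proof
  assume ip: "IP_star A" and fin: "finite A"
  then obtain M where M: "\<forall>n\<in>A. n < M" using finite_nat_set_iff_bounded by blast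
  define x where "x i = M + i" for i :: nat
  have "IP_set {n. n \<ge> M}"
    unfolding IP_set_def
  proof (intro exI conjI allI impI)
    show "strict_mono x" by (simp add: strict_mono_def x_def)
    fix F :: "nat set" assume F: "finite F \<and> F \<noteq> {}"
    then obtain i where "i \<in> F" by auto
    then have "x i \<le> sum x F" using F by (intro member_le_sum) auto
    then show "sum x F \<in> {n. n \<ge> M}" by (simp add: x_def)
  qed
  then have "A \<inter> {n. n \<ge> M} \<noteq> {}" using ip by (simp add: IP_star_def)
  then show False using M by auto
qed


section \<open>Galvin-Glazer\<close>

fun build :: "(nat list \<Rightarrow> nat) \<Rightarrow> nat \<Rightarrow> nat list" where
  "build c 0 = []"
| "build c (Suc n) = build c n @ [c (build c n)]"

lemma build_length[simp]: "length (build c n) = n"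
  by (induction n) auto

lemma build_prefix: "i < n \<Longrightarrow> build c (n + k) ! i = build c n ! i"
  by (induction k) (auto simp: nth_append)

context
  fixes p :: "nat set set"
  assumes uf: "ultrafilter_nat p" and np: "\<not> principal p" and idem: "bplus p p = p"
begin

lemma uf_UNIV: "UNIV \<in> p" using uf by (simp add: ultrafilter_nat_def)
lemma uf_empty: "{} \<notin> p" using uf by (simp add: ultrafilter_nat_def)
lemma uf_mono: "A \<in> p \<Longrightarrow> A \<subseteq> B \<Longrightarrow> B \<in> p" using uf unfolding ultrafilter_nat_def by blast
lemma uf_int: "A \<in> p \<Longrightarrow> B \<in> p \<Longrightarrow> A \<inter> B \<in> p" using uf unfolding ultrafilter_nat_def by blast
lemma uf_compl: "A \<in> p \<or> - A \<in> p" using uf unfolding ultrafilter_nat_def by blast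

lemma uf_finite: "finite S \<Longrightarrow> S \<notin> p"
proof (induction S rule: finite_induct)
  case empty then show ?case using uf_empty by simp
next
  case (insert x S)
  show ?case
  proof
    assume ins: "insert x S \<in> p"
    have "{x} \<notin> p" using np by (auto simp: principal_def)
    then have "- {x} \<in> p" using uf_compl by blast
    then have "insert x S \<inter> - {x} \<in> p" using ins uf_int by blast
    then have "S \<in> p" by (rule uf_mono) auto
    then show False using insert by simp
  qed
qed

lemma uf_cofinite: "{m. N < m} \<in> p"
proof -
  have "- {m. N < m} \<notin> p" using uf_finite[of "- {m. N < m}"] by (simp add: Compl_eq Collect_neg_eq[symmetric] not_less)
  then show ?thesis using uf_compl by blast
qed

lemma uf_Inter: "finite I \<Longrightarrow> (\<forall>i\<in>I. B i \<in> p) \<Longrightarrow> (\<Inter>i\<in>I. B i) \<in> p"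
proof (induction I rule: finite_induct)
  case empty then show ?case using uf_UNIV by simp
next
  case (insert x I) then show ?case using uf_int by simp
qed

definition star :: "nat set \<Rightarrow> nat set" where
  "star A = {n \<in> A. {m. m + n \<in> A} \<in> p}"

lemma star_in: "A \<in> p \<Longrightarrow> star A \<in> p"
proof -
  assume A: "A \<in> p"
  then have "A \<in> bplus p p" using idem by simp
  then have "{n. {m. m + n \<in> A} \<in> p} \<in> p" by (simp add: bplus_def)
  then have "A \<inter> {n. {m. m + n \<in> A} \<in> p} \<in> p" using A uf_int by blast
  then show ?thesis by (simp add: star_def Int_def)
qed

lemma star_shift: "n \<in> star A \<Longrightarrow> {m. m + n \<in> star A} \<in> p"
proof -
  assume n: "n \<in> star A"
  define B where "B = {m. m + n \<in> A}"
  have B: "B \<in> p" using n by (simp add: star_def B_def)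
  then have "B \<in> bplus p p" using idem by simp
  then have C: "{m'. {m. m + m' \<in> B} \<in> p} \<in> p" by (simp add: bplus_def)
  have "B \<inter> {m'. {m. m + m' \<in> B} \<in> p} \<subseteq> {m. m + n \<in> star A}"
  proof
    fix m' assume m': "m' \<in> B \<inter> {m'. {m. m + m' \<in> B} \<in> p}"
    then have "m' + n \<in> A" by (simp add: B_def)
    moreover have "{m. m + (m' + n) \<in> A} \<in> p" using m' by (simp add: B_def add.assoc)
    ultimately show "m' \<in> {m. m + n \<in> star A}" by (simp add: star_def)
  qed
  then show ?thesis using uf_mono uf_int[OF B C] by blast
qed

lemma galvin_glazer:
  assumes A: "A \<in> p"
  shows "IP_set A"
proof -
  define D where "D = star A"
  have D: "D \<in> p" "D \<subseteq> A" using star_in[OF A] by (auto simp: D_def star_def)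
  define Inv where "Inv l \<longleftrightarrow> (\<forall>F. F \<subseteq> {..<length l} \<and> F \<noteq> {} \<longrightarrow> (\<Sum>i\<in>F. l ! i) \<in> D)" for l
  define G where "G l = D \<inter> (\<Inter>F\<in>{F. F \<subseteq> {..<length l} \<and> F \<noteq> {}}. {m. m + (\<Sum>i\<in>F. l ! i) \<in> D})
      \<inter> (\<Inter>i\<in>{..<length l}. {m. l ! i < m})" for l
  have Gp: "G l \<in> p" if "Inv l" for l
  proof -
    have "(\<Inter>F\<in>{F. F \<subseteq> {..<length l} \<and> F \<noteq> {}}. {m. m + (\<Sum>i\<in>F. l ! i) \<in> D}) \<in> p"
    proof (rule uf_Inter)
      show "finite {F. F \<subseteq> {..<length l} \<and> F \<noteq> {}}" by simp
      show "\<forall>F\<in>{F. F \<subseteq> {..<length l} \<and> F \<noteq> {}}. {m. m + (\<Sum>i\<in>F. l ! i) \<in> D} \<in> p"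
        using that star_shift unfolding Inv_def D_def by blast
    qed
    moreover have "(\<Inter>i\<in>{..<length l}. {m. l ! i < m}) \<in> p"
      by (rule uf_Inter) (auto intro: uf_cofinite)
    ultimately show ?thesis unfolding G_def using D(1) uf_int by blast
  qed
  define c where "c l = (SOME m. m \<in> G l)" for l
  have c: "c l \<in> G l" if "Inv l" for l
    unfolding c_def using Gp[OF that] uf_empty by (metis ex_in_conv someI_ex)
  have Inv_snoc: "Inv (l @ [m])" if l: "Inv l" and m: "m \<in> G l" for l m
    unfolding Inv_def
  proof (intro allI impI)
    fix F assume F: "F \<subseteq> {..<length (l @ [m])} \<and> F \<noteq> {}"
    show "(\<Sum>i\<in>F. (l @ [m]) ! i) \<in> D"
    proof (cases "length l \<in> F")
      case False
      then have sub: "F \<subseteq> {..<length l}" using F by (auto simp: subset_iff less_Suc_eq)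
      then have "(\<Sum>i\<in>F. (l @ [m]) ! i) = (\<Sum>i\<in>F. l ! i)" by (intro sum.cong) (auto simp: nth_append)
      then show ?thesis using l sub F unfolding Inv_def by simp
    next
      case True
      define F' where "F' = F - {length l}"
      have F': "F' \<subseteq> {..<length l}" using F by (auto simp: F'_def)
      have "(\<Sum>i\<in>F. (l @ [m]) ! i) = m + (\<Sum>i\<in>F'. (l @ [m]) ! i)"
        using True F by (simp add: F'_def sum.remove[of F "length l"] finite_subset[of F "{..<Suc (length l)}"])
      also have "(\<Sum>i\<in>F'. (l @ [m]) ! i) = (\<Sum>i\<in>F'. l ! i)"
        using F' by (intro sum.cong) (auto simp: nth_append)
      finally have eq: "(\<Sum>i\<in>F. (l @ [m]) ! i) = m + (\<Sum>i\<in>F'. l ! i)" .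
      show ?thesis
      proof (cases "F' = {}")
        case True then show ?thesis using eq m by (simp add: G_def)
      next
        case False then show ?thesis using eq m F' by (auto simp: G_def)
      qed
    qed
  qed
  define ys where "ys = build c"
  have invys: "Inv (ys n)" for n
  proof (induction n)
    case 0 then show ?case by (simp add: Inv_def ys_def)
  next
    case (Suc n) then show ?case using Inv_snoc c by (simp add: ys_def)
  qed
  define x where "x i = ys (Suc i) ! i" for i
  have ys_nth: "ys n ! i = x i" if "i < n" for n i
  proof -
    have "ys (Suc i + (n - Suc i)) ! i = ys (Suc i) ! i" unfolding ys_def by (rule build_prefix) simp
    then show ?thesis using that by (simp add: x_def)
  qed
  have "strict_mono x"
  proof (rule strict_monoI_Suc)
    fix i
    have "x (Suc i) = c (ys (Suc i))" by (simp add: x_def ys_def nth_append)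
    moreover have "c (ys (Suc i)) \<in> G (ys (Suc i))" by (rule c[OF invys])
    moreover have "length (ys (Suc i)) = Suc i" by (simp add: ys_def)
    ultimately have "ys (Suc i) ! i < x (Suc i)" by (auto simp: G_def)
    then show "x i < x (Suc i)" by (simp add: x_def)
  qed
  moreover have "sum x F \<in> A" if F: "finite F" "F \<noteq> {}" for F
  proof -
    define n where "n = Suc (Max F)"
    have sub: "F \<subseteq> {..<n}" using F by (auto simp: n_def le_imp_less_Suc)
    have "sum x F = (\<Sum>i\<in>F. ys n ! i)" using sub by (intro sum.cong) (auto simp: ys_nth)
    also have "\<dots> \<in> D" using invys[of n] sub F by (simp add: Inv_def ys_def)
    finally show ?thesis using D(2) by blast
  qed
  ultimately show ?thesis unfolding IP_set_def by blast
qed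

end

lemma IP_star_central_star: "IP_star A \<Longrightarrow> central_star A"
  unfolding central_star_def
proof (intro allI impI)
  fix p assume ip: "IP_star A" and mi: "minimal_idempotent p"
  then have uf: "ultrafilter_nat p" "\<not> principal p" "bplus p p = p"
    by (auto simp: minimal_idempotent_def betaN_def)
  show "A \<in> p"
  proof (rule ccontr)
    assume "A \<notin> p"
    then have "- A \<in> p" using uf(1) unfolding ultrafilter_nat_def by blast
    then have "IP_set (- A)" by (rule galvin_glazer[OF uf])
    then have "A \<inter> - A \<noteq> {}" using ip unfolding IP_star_def by blast
    then show False by simp
  qed
qed

theorem mainTheorem14:
  fixes w w' :: "nat \<Rightarrow> nat" and u u' :: "nat list"
  assumes "sturmian w" and "nonsingular w"
    and "sturmian w'" and "nonsingular w'"
    and "u \<noteq> []" and "is_prefix u w"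
    and "u' \<noteq> []" and "is_prefix u' w'"
  shows "IP_star (occurrences w u \<inter> occurrences w' u')
       \<and> central_star (occurrences w u \<inter> occurrences w' u')
       \<and> infinite (occurrences w u \<inter> occurrences w' u')"
proof -
  obtain e1 where e1: "e1 > 0" "\<forall>n (K::int). \<bar>real n * alpha w - of_int K\<bar> < e1 \<longrightarrow> factor_at w n (length u) = factor_at w 0 (length u)"
    using bohr_inclusion[OF assms(1) assms(2)] by blast
  obtain e2 where e2: "e2 > 0" "\<forall>n (K::int). \<bar>real n * alpha w' - of_int K\<bar> < e2 \<longrightarrow> factor_at w' n (length u') = factor_at w' 0 (length u')"
    using bohr_inclusion[OF assms(3) assms(4)] by blast
  have ip: "IP_star (occurrences w u \<inter> occurrences w' u')"
    unfolding IP_star_def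
  proof (intro allI impI)
    fix B assume "IP_set B"
    then obtain y :: "nat \<Rightarrow> nat" where y: "\<forall>F. finite F \<and> F \<noteq> {} \<longrightarrow> sum y F \<in> B"
      by (auto simp: IP_set_def)
    obtain F K1 K2 where F: "finite F" "F \<noteq> {}"
      and K: "\<bar>real (sum y F) * alpha w - of_int K1\<bar> < min e1 e2" "\<bar>real (sum y F) * alpha w' - of_int K2\<bar> < min e1 e2"
      using ip_bohr[of "min e1 e2" y "alpha w" "alpha w'"] e1(1) e2(1) by auto
    have k1: "\<bar>real (sum y F) * alpha w - of_int K1\<bar> < e1" using K(1) min.cobounded1[of e1 e2] by linarith
    have k2: "\<bar>real (sum y F) * alpha w' - of_int K2\<bar> < e2" using K(2) min.cobounded2[of e1 e2] by linarith
    have "factor_at w (sum y F) (length u) = factor_at w 0 (length u)" using e1(2) k1 by blast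
    then have "factor_at w (sum y F) (length u) = u" using assms(6) by (simp add: is_prefix_def)
    moreover have "factor_at w' (sum y F) (length u') = factor_at w' 0 (length u')" using e2(2) k2 by blast
    then have "factor_at w' (sum y F) (length u') = u'" using assms(8) by (simp add: is_prefix_def)
    ultimately have "sum y F \<in> occurrences w u \<inter> occurrences w' u'" by (simp add: occurrences_def)
    moreover have "sum y F \<in> B" using y F by blast
    ultimately show "occurrences w u \<inter> occurrences w' u' \<inter> B \<noteq> {}" by blast
  qed
  show ?thesis using ip IP_star_central_star IP_star_infinite by blast
qed


end
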